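(* Let $d\geq 2$, $1\leq k\leq d-1$, let $A\subset\mathbb{R}^d$ have positive reach and let $a\in T_k(A)$. Then there exists $\delta>0$ such that the mapping $\psi_k^A$ is Lipschitz on $T_k(A)\cap B(a,\delta)$ (with respect to the metric $\rho_k$ on $G(d,k)$).
   Context: A set $A\subset\mathbb{R}^d$ has positive reach if there is $\varepsilon>0$ such that every $x$ with $\mathrm{dist}(x,A)<\varepsilon$ has a unique nearest point in $A$. $\operatorname{Tan}(A,x)$ is the tangent cone of $A$ at $x\in A$ ($u\in\operatorname{Tan}(A,x)$ iff $u=0$ or $r_i(x_i-x)\to u$ for some $x\neq x_i\in A$, $x_i\to x$, $r_i>0$); $\widetilde{\operatorname{Tan}}(A,x)=\operatorname{span}\operatorname{Tan}(A,x)$. $T_k(A)=\{x\in A:\dim\widetilde{\operatorname{Tan}}(A,x)=k\}$. $G(d,k)$ is the Grassmannian of $k$-dimensional linear subspaces of $\mathbb{R}^d$, with the metric $\rho_k(U,V)=\max\big(\sup_{u\in U,|u|=1}\mathrm{dist}(u,V),\sup_{v\in V,|v|=1}\mathrm{dist}(v,U)\big)$ (equivalently $\|\pi_U-\pi_V\|$ for orthogonal projections). $\psi_k^A:T_k(A)\to G(d,k)$ is $\psi_k^A(x)=\widetilde{\operatorname{Tan}}(A,x)$. *)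

theory Defs
  imports "HOL-Analysis.Analysis"
begin

definition positive_reach :: "'a::euclidean_space set \<Rightarrow> bool" where
  "positive_reach A \<longleftrightarrow> (\<exists>\<epsilon>>0. \<forall>x. infdist x A < \<epsilon> \<longrightarrow>
      (\<exists>!p. p \<in> A \<and> dist x p = infdist x A))"

definition Tan :: "'a::euclidean_space set \<Rightarrow> 'a \<Rightarrow> 'a set" where
  "Tan A x = {u. u = 0 \<or> (\<exists>xs r. (\<forall>i. xs i \<in> A \<and> xs i \<noteq> x \<and> r i > 0) \<and>
      xs \<longlonglongrightarrow> x \<and> (\<lambda>i. r i *\<^sub>R (xs i - x)) \<longlonglongrightarrow> u)}"

definition Tan_span :: "'a::euclidean_space set \<Rightarrow> 'a \<Rightarrow> 'a set" where
  "Tan_span A x = span (Tan A x)"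

definition T_k :: "'a::euclidean_space set \<Rightarrow> nat \<Rightarrow> 'a set" where
  "T_k A k = {x \<in> A. dim (Tan_span A x) = k}"

definition grass_dist :: "'a::euclidean_space set \<Rightarrow> 'a set \<Rightarrow> real" where
  "grass_dist U V = max (SUP u\<in>{u\<in>U. norm u = 1}. infdist u V)
                        (SUP v\<in>{v\<in>V. norm v = 1}. infdist v U)"

definition psi :: "'a::euclidean_space set \<Rightarrow> 'a \<Rightarrow> 'a set" where
  "psi A x = Tan_span A x"

end

theory Submission
  imports Defs
begin


lemma infdist_ge_gen: fixes S :: "'b::metric_space set"
  shows "S \<noteq> {} \<Longrightarrow> (\<And>z. z \<in> S \<Longrightarrow> c \<le> dist x z) \<Longrightarrow> c \<le> infdist x S"
  by (simp add: infdist_notempty cINF_greatest)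

locale pr =
  fixes A :: "'a::euclidean_space set" and e :: real
  assumes e_pos: "0 < e"
    and uniq: "\<And>x. infdist x A < e \<Longrightarrow> \<exists>!p. p \<in> A \<and> dist x p = infdist x A"
begin

lemma A_ne: "A \<noteq> {}"
  using uniq[of 0] e_pos by (auto simp: infdist_def)

lemma A_closed: "closed A"
proof -
  have "closure A \<subseteq> A"
  proof
    fix x assume "x \<in> closure A"
    then have "infdist x A = 0" using in_closure_iff_infdist_zero A_ne by blast
    then obtain p where "p \<in> A" "dist x p = 0" using uniq[of x] e_pos by auto
    then show "x \<in> A" by simp
  qed
  then show ?thesis using closure_subset_eq by blast
qed

definition P :: "'a \<Rightarrow> 'a" where
  "P x = (THE p. p \<in> A \<and> dist x p = infdist x A)"

lemma P_prop: assumes "infdist x A < e" shows "P x \<in> A" "dist x (P x) = infdist x A"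
proof -
  have "P x \<in> A \<and> dist x (P x) = infdist x A"
    unfolding P_def by (rule theI'[OF uniq[OF assms]])
  then show "P x \<in> A" "dist x (P x) = infdist x A" by auto
qed

lemma P_unique: assumes "infdist x A < e" "p \<in> A" "dist x p = infdist x A" shows "P x = p"
  using uniq[OF assms(1)] P_prop[OF assms(1)] assms(2,3) by blast

lemma P_unique2: assumes "dist x p < e" "p \<in> A" "\<And>z. z \<in> A \<Longrightarrow> dist x p \<le> dist x z"
  shows "P x = p"
proof -
  have "infdist x A = dist x p"
    using assms A_ne infdist_ge_gen[of A "dist x p" x] infdist_le[of p A x] by auto
  then show ?thesis using assms P_unique by auto
qed

lemma dist_P_le: assumes "infdist x A < e" "z \<in> A" shows "dist x (P x) \<le> dist x z"
  using P_prop[OF assms(1)] infdist_le[OF assms(2)] by auto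

definition U where "U = {x. infdist x A < e}"

lemma open_U: "open U"
  unfolding U_def by (intro open_Collect_less continuous_intros)

lemma graph_closed:
  assumes "closed S" "S \<subseteq> U"
  shows "closed ((\<lambda>x. (x, P x)) ` S)"
proof (rule closed_sequential_limits[THEN iffD2], intro allI impI)
  fix s l
  assume h: "(\<forall>n. s n \<in> (\<lambda>x. (x, P x)) ` S) \<and> s \<longlonglongrightarrow> l"
  define xs where "xs n = fst (s n)" for n
  have sn: "s n = (xs n, P (xs n))" "xs n \<in> S" for n
  proof -
    obtain y where "y \<in> S" "s n = (y, P y)" using h by blast
    then show "s n = (xs n, P (xs n))" "xs n \<in> S" unfolding xs_def by auto
  qed
  have sl: "s \<longlonglongrightarrow> l" using h by blast
  have c1: "xs \<longlonglongrightarrow> fst l" unfolding xs_def using tendsto_fst[OF sl] .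
  have "(\<lambda>n. snd (s n)) \<longlonglongrightarrow> snd l" using tendsto_snd[OF sl] .
  moreover have "(\<lambda>n. snd (s n)) = (\<lambda>n. P (xs n))" using sn(1) by simp
  ultimately have c2: "(\<lambda>n. P (xs n)) \<longlonglongrightarrow> snd l" by simp
  have "fst l \<in> S" using closed_sequentially[OF assms(1), of xs] sn(2) c1 by blast
  then have lU: "infdist (fst l) A < e" using assms(2) U_def by auto
  have "P (xs n) \<in> A" for n using P_prop(1)[of "xs n"] sn(2) assms(2) U_def by auto
  then have "snd l \<in> A" using closed_sequentially[OF A_closed, of "\<lambda>n. P (xs n)"] c2 by blast
  moreover have "dist (fst l) (snd l) = infdist (fst l) A"
  proof -
    have "(\<lambda>n. dist (xs n) (P (xs n))) \<longlonglongrightarrow> dist (fst l) (snd l)" by (intro tendsto_intros c1 c2)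
    moreover have "(\<lambda>n. dist (xs n) (P (xs n))) = (\<lambda>n. infdist (xs n) A)"
    proof
      fix n have "infdist (xs n) A < e" using sn(2) assms(2) U_def by auto
      then show "dist (xs n) (P (xs n)) = infdist (xs n) A" by (rule P_prop)
    qed
    moreover have "(\<lambda>n. infdist (xs n) A) \<longlonglongrightarrow> infdist (fst l) A" by (intro tendsto_intros c1)
    ultimately show ?thesis using LIMSEQ_unique[of "\<lambda>n. infdist (xs n) A"] by metis
  qed
  ultimately have "P (fst l) = snd l" using P_unique lU by auto
  then have "l = (fst l, P (fst l))" by simp
  then show "l \<in> (\<lambda>x. (x, P x)) ` S" using \<open>fst l \<in> S\<close> by (rule image_eqI)
qed

lemma P_cont: "continuous_on U P"
proof -
  have "isCont P x" if "x \<in> U" for x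
  proof -
    obtain r where r: "r > 0" "cball x r \<subseteq> U" using open_U \<open>x \<in> U\<close> open_contains_cball by blast
    have "continuous_on (cball x r) P"
    proof (rule continuous_from_closed_graph[of "cball x (r + e)"])
      show "compact (cball x (r + e))" by simp
      show "P \<in> cball x r \<rightarrow> cball x (r + e)"
      proof
        fix y assume y: "y \<in> cball x r"
        then have "infdist y A < e" using r U_def by auto
        then have "dist y (P y) < e" using P_prop by auto
        then show "P y \<in> cball x (r + e)" using y dist_triangle[of x "P y" y] by (simp add: dist_commute)
      qed
      show "closed ((\<lambda>x. (x, P x)) ` cball x r)" using graph_closed r by auto
    qed
    then show ?thesis using r
      using continuous_on_interior[of "cball x r" P x] by simp
  qed
  then show ?thesis by (simp add: continuous_at_imp_continuous_on)
qed

end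


lemma normalize_diff_le:
  fixes u w :: "'a::real_normed_vector"
  assumes "w \<noteq> 0"
  shows "norm ((1 / norm u) *\<^sub>R u - (1 / norm w) *\<^sub>R w) \<le> 2 * norm (u - w) / norm w"
proof (cases "u = 0")
  case True
  then show ?thesis using assms by simp
next
  case False
  have "norm ((1 / norm u) *\<^sub>R u - (1 / norm w) *\<^sub>R w)
      \<le> norm ((1 / norm u) *\<^sub>R u - (1 / norm w) *\<^sub>R u) + norm ((1 / norm w) *\<^sub>R u - (1 / norm w) *\<^sub>R w)"
    by (metis dist_norm dist_triangle)
  also have "norm ((1 / norm u) *\<^sub>R u - (1 / norm w) *\<^sub>R u) = \<bar>1 / norm u - 1 / norm w\<bar> * norm u"
    by (simp add: scaleR_left_diff_distrib[symmetric])
  also have "\<bar>1 / norm u - 1 / norm w\<bar> * norm u = \<bar>norm w - norm u\<bar> / norm w"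
    using False assms by (simp add: divide_simps abs_minus_commute)
  also have "norm ((1 / norm w) *\<^sub>R u - (1 / norm w) *\<^sub>R w) = norm (u - w) / norm w"
    by (simp add: scaleR_right_diff_distrib[symmetric])
  also have "\<bar>norm w - norm u\<bar> \<le> norm (u - w)"
    using norm_triangle_ineq3[of w u] by (simp add: norm_minus_commute)
  then have "\<bar>norm w - norm u\<bar> / norm w \<le> norm (u - w) / norm w"
    by (simp add: divide_right_mono)
  finally show ?thesis by simp
qed

definition nb :: "'a::euclidean_space set \<Rightarrow> 'a \<Rightarrow> 'a \<Rightarrow> real \<Rightarrow> bool" where
  "nb S p n t \<longleftrightarrow> (\<forall>z\<in>S. t \<le> dist (p + t *\<^sub>R n) z)"

lemma nb_mono:
  assumes "nb S p n t" "norm n = 1" "0 \<le> t'" "t' \<le> t"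
  shows "nb S p n t'"
  unfolding nb_def
proof
  fix z assume "z \<in> S"
  have "t \<le> dist (p + t *\<^sub>R n) z" using assms(1) \<open>z \<in> S\<close> by (auto simp: nb_def)
  moreover have "dist (p + t *\<^sub>R n) (p + t' *\<^sub>R n) = t - t'"
    using assms by (simp add: dist_norm scaleR_diff_left[symmetric])
  moreover have "dist (p + t *\<^sub>R n) z \<le> dist (p + t *\<^sub>R n) (p + t' *\<^sub>R n) + dist (p + t' *\<^sub>R n) z"
    by (rule dist_triangle)
  ultimately show "t' \<le> dist (p + t' *\<^sub>R n) z" by linarith
qed

lemma nb_ineq:
  assumes "nb S p n t" "norm n = 1" "0 < t" "z \<in> S"
  shows "n \<bullet> (z - p) \<le> (norm (z - p))\<^sup>2 / (2 * t)"
proof -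
  have "t \<le> norm (p + t *\<^sub>R n - z)" using assms by (auto simp: nb_def dist_norm)
  moreover have "p + t *\<^sub>R n - z = t *\<^sub>R n - (z - p)" by (simp add: algebra_simps)
  ultimately have "t\<^sup>2 \<le> (norm (t *\<^sub>R n - (z - p)))\<^sup>2"
    using assms(3) power_mono[of t "norm (t *\<^sub>R n - (z - p))" 2] by simp
  also have "(norm (t *\<^sub>R n - (z - p)))\<^sup>2 = t\<^sup>2 - 2 * t * (n \<bullet> (z - p)) + (norm (z - p))\<^sup>2"
  proof -
    have nn: "n \<bullet> n = 1" using assms(2) by (simp add: norm_eq_1)
    have "(norm (t *\<^sub>R n - (z - p)))\<^sup>2 = (t *\<^sub>R n - (z - p)) \<bullet> (t *\<^sub>R n - (z - p))"
      by (rule power2_norm_eq_inner)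
    also have "\<dots> = t * t * (n \<bullet> n) - 2 * t * (n \<bullet> (z - p)) + (z - p) \<bullet> (z - p)"
      by (simp add: inner_diff_left inner_diff_right inner_commute[of z n] inner_commute[of p n] algebra_simps)
    also have "\<dots> = t\<^sup>2 - 2 * t * (n \<bullet> (z - p)) + (norm (z - p))\<^sup>2"
      using nn by (simp add: power2_norm_eq_inner[symmetric] power2_eq_square)
    finally show ?thesis .
  qed
  finally have "2 * t * (n \<bullet> (z - p)) \<le> (norm (z - p))\<^sup>2" by simp
  then show ?thesis using assms(3) by (simp add: field_simps)
qed



lemma norm_add_sq: fixes x y :: "'a::real_inner"
  shows "(norm (x + y))\<^sup>2 = (norm x)\<^sup>2 + 2 * (x \<bullet> y) + (norm y)\<^sup>2"
  unfolding power2_norm_eq_inner by (simp add: inner_add_left inner_add_right inner_commute[of y x])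

context pr begin

lemma P_near: "z \<in> U \<Longrightarrow> dist z (P z) = infdist z A" "z \<in> U \<Longrightarrow> P z \<in> A"
  using P_prop U_def by auto

lemma ray_step:
  assumes p: "p \<in> A" and n: "norm n = 1" and tau: "0 < \<tau>" "\<tau> < e" and nbt: "nb A p n \<tau>"
  shows "\<exists>t. \<tau> < t \<and> t < e \<and> nb A p n t"
proof -
  define b where "b = p + \<tau> *\<^sub>R n"
  have nbt': "\<And>w. w \<in> A \<Longrightarrow> \<tau> \<le> dist b w" using nbt unfolding nb_def b_def by auto
  have dbp: "dist b p = \<tau>" using n tau unfolding b_def by (simp add: dist_norm)
  have Pb: "P b = p" using P_unique2[of b p] dbp tau p nbt' by auto
  have bU: "b \<in> U" using infdist_le[OF p, of b] dbp tau unfolding U_def by auto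
  have db: "infdist b A = \<tau>" using P_near[OF bU] Pb dbp by simp
  obtain r1 where r1: "r1 > 0" "\<And>z. z \<in> U \<Longrightarrow> dist z b < r1 \<Longrightarrow> dist (P z) p < \<tau> / 16"
    using P_cont bU tau Pb unfolding continuous_on_iff by (metis divide_pos_pos zero_less_numeral)
  obtain r2 where r2: "r2 > 0" "ball b r2 \<subseteq> U" using open_U bU open_contains_ball by blast
  define h where "h = min (min r1 r2 / 4) (min (\<tau>/32) ((e - \<tau>)/4))"
  have h: "h > 0" "4 * h \<le> r1" "4 * h \<le> r2" "32 * h \<le> \<tau>" "4 * h \<le> e - \<tau>"
  proof -
    have "h \<le> min r1 r2 / 4" "h \<le> \<tau>/32" "h \<le> (e - \<tau>)/4" unfolding h_def
      by (simp_all only: min.bounded_iff min.cobounded1 min.cobounded2 order_refl conj_absorb)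
    moreover have "h > 0" using r1 r2 tau unfolding h_def by auto
    ultimately show "h > 0" "4 * h \<le> r1" "4 * h \<le> r2" "32 * h \<le> \<tau>" "4 * h \<le> e - \<tau>" by auto
  qed
  define c where "c = b + h *\<^sub>R n"
  define E where "E = {z. (z - c) \<bullet> n = 0} \<inter> cball c h"
  define Pr where "Pr w = w - (w \<bullet> n) *\<^sub>R n" for w
  define N where "N z = (1 / infdist z A) *\<^sub>R (z - P z)" for z
  define g where "g z = c + (infdist z A - \<tau>) *\<^sub>R Pr (N z)" for z
  have nn: "n \<bullet> n = 1" using n by (simp add: norm_eq_1)
  have Pr_n: "Pr w \<bullet> n = 0" for w unfolding Pr_def using nn by (simp add: inner_diff_left)
  have Pr_norm: "norm (Pr w) \<le> norm w" for w
  proof -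
    have "(norm (Pr w))\<^sup>2 = (norm w)\<^sup>2 - (w \<bullet> n)\<^sup>2"
      unfolding Pr_def power2_norm_eq_inner using nn
      by (simp add: inner_diff_left inner_diff_right inner_commute[of n w] power2_eq_square algebra_simps)
    then have "(norm (Pr w))\<^sup>2 \<le> (norm w)\<^sup>2" by simp
    then show ?thesis by (simp add: power2_le_iff_abs_le)
  qed
  have Pr_diff: "Pr (v - w) = Pr v - Pr w" for v w unfolding Pr_def by (simp add: inner_diff_left algebra_simps)
  have Pr_nz: "Pr n = 0" unfolding Pr_def using nn by simp
  have Pr_orth: "w \<bullet> n = 0 \<Longrightarrow> Pr w = w" for w unfolding Pr_def by simp
  have Pr_zero: "Pr w = 0 \<Longrightarrow> w = (w \<bullet> n) *\<^sub>R n" for w unfolding Pr_def by simp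
  have reg: "z \<in> U \<and> dist (P z) p < \<tau> / 16 \<and> \<bar>infdist z A - \<tau>\<bar> \<le> dist z b \<and> infdist z A > 0
           \<and> norm (N z - n) \<le> 1/4"
    if zb: "dist z b \<le> 2 * h" for z
  proof -
    have zU: "z \<in> U" using r2 zb h by (auto simp: dist_commute)
    have zP: "dist (P z) p < \<tau> / 16" using r1(2)[OF zU] zb h by auto
    have ab: "\<bar>infdist z A - \<tau>\<bar> \<le> dist z b" using infdist_triangle_abs[of z A b] db by simp
    have pos: "infdist z A > 0" using ab zb h by auto
    have "norm ((z - P z) - \<tau> *\<^sub>R n) = norm ((z - b) + (p - P z))"
      unfolding b_def by (simp add: algebra_simps)
    also have "\<dots> \<le> norm (z - b) + norm (p - P z)" by (rule norm_triangle_ineq)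
    also have "\<dots> \<le> \<tau> / 8" using zb zP h by (simp add: dist_norm norm_minus_commute)
    finally have A1: "norm ((z - P z) - \<tau> *\<^sub>R n) \<le> \<tau> / 8" .
    have "norm (z - P z) = infdist z A" using P_near(1)[OF zU] by (simp add: dist_norm)
    then have Nz: "N z = (1 / norm (z - P z)) *\<^sub>R (z - P z)" unfolding N_def by simp
    have nrm: "n = (1 / norm (\<tau> *\<^sub>R n)) *\<^sub>R (\<tau> *\<^sub>R n)" using n tau by simp
    have "norm (N z - n) \<le> 2 * norm ((z - P z) - \<tau> *\<^sub>R n) / norm (\<tau> *\<^sub>R n)"
      unfolding Nz by (subst nrm, rule normalize_diff_le) (use n tau in auto)
    also have "\<dots> \<le> 2 * (\<tau> / 8) / \<tau>" using A1 n tau by (simp add: divide_right_mono)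
    also have "\<dots> = 1/4" using tau by simp
    finally show ?thesis using zU zP ab pos by auto
  qed
  have EU: "E \<subseteq> U"
  proof
    fix z assume "z \<in> E"
    then have "dist z c \<le> h" unfolding E_def by (simp add: dist_commute)
    moreover have "dist c b = h" unfolding c_def using n h by (simp add: dist_norm)
    ultimately have "dist z b \<le> 2 * h" using dist_triangle[of z b c] by linarith
    then show "z \<in> U" using reg by blast
  qed
  have Ezb: "dist z b \<le> 2 * h" if "z \<in> E" for z
  proof -
    have "dist z c \<le> h" using that unfolding E_def by (simp add: dist_commute)
    moreover have "dist c b = h" unfolding c_def using n h by (simp add: dist_norm)
    ultimately show ?thesis using dist_triangle[of z b c] by linarith
  qed
  have contg: "continuous_on E g"
  proof -
    have cP: "continuous_on E P" using continuous_on_subset[OF P_cont EU] .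
    have cd: "continuous_on E (\<lambda>z. infdist z A)" by (intro continuous_intros)
    have nz: "\<forall>z\<in>E. infdist z A \<noteq> 0" using reg Ezb by force
    have cN: "continuous_on E N" unfolding N_def
      by (intro continuous_intros cP cd) (use nz in auto)
    show ?thesis unfolding g_def Pr_def by (intro continuous_intros cN cd)
  qed
  have gE: "g \<in> E \<rightarrow> E"
  proof
    fix z assume zE: "z \<in> E"
    have R: "\<bar>infdist z A - \<tau>\<bar> \<le> 2 * h" "norm (N z - n) \<le> 1/4"
      using reg[OF Ezb[OF zE]] Ezb[OF zE] by auto
    have "norm (Pr (N z)) \<le> 1/4"
      using Pr_norm[of "N z - n"] R(2) Pr_diff[of "N z" n] Pr_nz by simp
    moreover have "norm (g z - c) = \<bar>infdist z A - \<tau>\<bar> * norm (Pr (N z))"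
      unfolding g_def by simp
    ultimately have "norm (g z - c) \<le> 2 * h * (1/4)"
      using R(1) mult_mono[of "\<bar>infdist z A - \<tau>\<bar>" "2 * h" "norm (Pr (N z))" "1/4"] h(1) by simp
    then have "dist c (g z) \<le> h" using h by (simp add: dist_norm norm_minus_commute)
    moreover have "(g z - c) \<bullet> n = 0" unfolding g_def using Pr_n by simp
    ultimately show "g z \<in> E" unfolding E_def by simp
  qed
  have Ecc: "compact E" "convex E" "E \<noteq> {}"
  proof -
    have "closed {z. (z - c) \<bullet> n = 0}" by (intro closed_Collect_eq continuous_intros)
    then show "compact E" unfolding E_def by (intro closed_Int_compact) auto
    have "{z. (z - c) \<bullet> n = 0} = {z. n \<bullet> z = n \<bullet> c}"
      by (auto simp: inner_diff_left inner_diff_right inner_commute[of _ n])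
    then have "convex {z. (z - c) \<bullet> n = 0}" using convex_hyperplane by metis
    then show "convex E" unfolding E_def by (intro convex_Int) auto
    have "c \<in> E" unfolding E_def using h by auto
    then show "E \<noteq> {}" by auto
  qed
  obtain z where zE: "z \<in> E" and zfix: "g z = z" using brouwer[OF Ecc contg gE] by blast
  have zb: "dist z b \<le> 2 * h" using Ezb[OF zE] .
  note R = reg[OF zb]
  define q where "q = P z"
  define dz where "dz = infdist z A"
  have zU: "z \<in> U" using R by blast
  have qA: "q \<in> A" using P_near(2)[OF zU] q_def by simp
  have dzq: "dist z q = dz" using P_near(1)[OF zU] q_def dz_def by simp
  have pq: "norm (p - q) < \<tau> / 16" using R q_def by (simp add: dist_norm norm_minus_commute)
  have dzpos: "dz > 0" using R dz_def by simp
  have absd: "\<bar>dz - \<tau>\<bar> \<le> 2 * h" using R dz_def zb by simp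
  have Nz: "N z = (1 / dz) *\<^sub>R (z - q)" unfolding N_def dz_def q_def by simp
  have zq: "z - q = dz *\<^sub>R N z" unfolding Nz using dzpos by simp
  have nNz: "norm (N z) = 1" unfolding Nz using dzq dzpos by (simp add: dist_norm)
  have zbn: "(z - b) \<bullet> n = h"
  proof -
    have "(z - c) \<bullet> n = 0" using zE unfolding E_def by simp
    moreover have "z - b = (z - c) + h *\<^sub>R n" unfolding c_def by simp
    ultimately show ?thesis using nn by (simp only: inner_add_left inner_scaleR_left)
  qed
  have bq: "b - q = \<tau> *\<^sub>R n + (p - q)" unfolding b_def by simp
  have nbq: "\<tau> \<le> norm (b - q)" using nbt'[OF qA] by (simp add: dist_norm)
  have C1: "dz > \<tau>"
  proof -
    have "(z - b) \<bullet> (b - q) = \<tau> * ((z - b) \<bullet> n) + (z - b) \<bullet> (p - q)"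
      unfolding bq by (simp add: inner_add_right)
    moreover have "\<bar>(z - b) \<bullet> (p - q)\<bar> \<le> norm (z - b) * norm (p - q)" by (rule Cauchy_Schwarz_ineq2)
    moreover have "norm (z - b) * norm (p - q) \<le> (2 * h) * (\<tau> / 16)"
      using zb pq h(1) by (intro mult_mono) (auto simp: dist_norm)
    moreover have "\<tau> * h > 0" using h tau by simp
    ultimately have ip: "(z - b) \<bullet> (b - q) > 0" using zbn by (simp add: abs_le_iff)
    have "(norm (z - q))\<^sup>2 = (norm (z - b))\<^sup>2 + 2 * ((z - b) \<bullet> (b - q)) + (norm (b - q))\<^sup>2"
      using norm_add_sq[of "z - b" "b - q"] by simp
    moreover have "\<tau>\<^sup>2 \<le> (norm (b - q))\<^sup>2" using nbq tau by (simp add: power_mono)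
    moreover have "(norm (z - b))\<^sup>2 \<ge> 0" by simp
    ultimately have "\<tau>\<^sup>2 < (norm (z - q))\<^sup>2" using ip by linarith
    then have "\<tau> < norm (z - q)" by (rule power2_less_imp_less) simp
    then show ?thesis using dzq by (simp add: dist_norm)
  qed
  define f where "f = q + \<tau> *\<^sub>R N z"
  have C4: "z - f = (dz - \<tau>) *\<^sub>R N z"
  proof -
    have "z - f = (z - q) - \<tau> *\<^sub>R N z" unfolding f_def by simp
    then show ?thesis unfolding zq by (simp add: scaleR_diff_left)
  qed
  have dzf: "dist z f = dz - \<tau>" using C4 nNz C1 by (simp add: dist_norm)
  have C2: "\<tau> \<le> dist f w" if "w \<in> A" for w
  proof -
    have "dz \<le> dist z w" using infdist_le[OF that] dz_def by simp
    then show ?thesis using dist_triangle[of z w f] dzf by (simp add: dist_commute)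
  qed
  have C3: "dist f q = \<tau>" unfolding f_def using nNz tau by (simp add: dist_norm)
  have Pr_scale: "Pr (a *\<^sub>R w) = a *\<^sub>R Pr w" for a w unfolding Pr_def by (simp add: algebra_simps)
  have zc: "z - c = (dz - \<tau>) *\<^sub>R Pr (N z)"
  proof -
    have "z = c + (dz - \<tau>) *\<^sub>R Pr (N z)" using zfix unfolding g_def dz_def by simp
    then show ?thesis by (metis add_diff_cancel_left')
  qed
  have "Pr (z - c) = z - c" using zE unfolding E_def by (intro Pr_orth) simp
  moreover have "Pr (z - f) = z - c" unfolding C4 Pr_scale zc ..
  moreover have "f - c = (z - c) - (z - f)" by simp
  moreover have "Pr (f - c) = Pr (z - c) - Pr (z - f)" using Pr_diff[of "z - c" "z - f"] by simp
  ultimately have "Pr (f - c) = 0" by simp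
  define \<kappa> where "\<kappa> = (f - c) \<bullet> n"
  have fc: "f - c = \<kappa> *\<^sub>R n" unfolding \<kappa>_def by (rule Pr_zero) fact
  define \<mu> where "\<mu> = h + \<kappa>"
  have fb: "f = b + \<mu> *\<^sub>R n"
  proof -
    have "c + (f - c) = c + \<kappa> *\<^sub>R n" using fc by (rule arg_cong)
    then have "f = c + \<kappa> *\<^sub>R n" by simp
    then show ?thesis unfolding c_def \<mu>_def by (simp add: scaleR_add_left)
  qed
  have C6: "\<bar>\<mu>\<bar> \<le> 4 * h"
  proof -
    have "dist f b \<le> dist f z + dist z b" by (rule dist_triangle)
    also have "\<dots> \<le> 4 * h" using dzf absd zb by (simp add: dist_commute)
    finally show ?thesis using fb n by (simp add: dist_norm)
  qed
  have C7: "\<mu> \<ge> 0"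
  proof (rule ccontr)
    assume "\<not> \<mu> \<ge> 0"
    have "f - p = (\<tau> + \<mu>) *\<^sub>R n" unfolding fb b_def by (simp add: scaleR_add_left)
    then have "dist f p = \<bar>\<tau> + \<mu>\<bar>" using n by (simp add: dist_norm)
    also have "\<dots> < \<tau>" using \<open>\<not> \<mu> \<ge> 0\<close> C6 h by auto
    finally show False using C2[OF p] by simp
  qed
  have C8: "\<mu> \<le> 0"
  proof (rule ccontr)
    assume "\<not> \<mu> \<le> 0"
    have "f - q = \<mu> *\<^sub>R n + (b - q)" unfolding fb by simp
    moreover have "(norm (\<mu> *\<^sub>R n + (b - q)))\<^sup>2 = \<mu>\<^sup>2 + 2 * (\<mu> * (n \<bullet> (b - q))) + (norm (b - q))\<^sup>2"
      using norm_add_sq[of "\<mu> *\<^sub>R n" "b - q"] n by (simp add: power_mult_distrib)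
    ultimately have "(norm (f - q))\<^sup>2 = \<mu>\<^sup>2 + 2 * (\<mu> * (n \<bullet> (b - q))) + (norm (b - q))\<^sup>2"
      by metis
    moreover have "n \<bullet> (b - q) = \<tau> + n \<bullet> (p - q)" unfolding bq using nn by (simp add: inner_add_right)
    moreover have "\<bar>n \<bullet> (p - q)\<bar> \<le> norm (p - q)" using Cauchy_Schwarz_ineq2[of n "p - q"] n by simp
    moreover have "\<tau>\<^sup>2 \<le> (norm (b - q))\<^sup>2" using nbq tau by (simp add: power_mono)
    ultimately have E1: "(norm (f - q))\<^sup>2 = \<mu>\<^sup>2 + 2 * (\<mu> * (n \<bullet> (b - q))) + (norm (b - q))\<^sup>2"
      and E2: "n \<bullet> (b - q) > 0" and E3: "\<tau>\<^sup>2 \<le> (norm (b - q))\<^sup>2" using pq tau by (auto simp: abs_le_iff)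
    have "\<mu> * (n \<bullet> (b - q)) > 0" using E2 \<open>\<not> \<mu> \<le> 0\<close> by simp
    moreover have "\<mu>\<^sup>2 \<ge> 0" by simp
    ultimately have "(norm (f - q))\<^sup>2 > \<tau>\<^sup>2" using E1 E3 by linarith
    then show False using C3 by (simp add: dist_norm)
  qed
  have fb': "f = b" using fb C7 C8 by simp
  have "q = p"
  proof -
    have "dist b q = infdist b A" using C3 fb' db by (simp add: dist_commute)
    moreover have "infdist b A < e" using bU unfolding U_def by simp
    ultimately have "P b = q" using P_unique qA by blast
    then show ?thesis using Pb by simp
  qed
  then have "\<tau> *\<^sub>R N z = \<tau> *\<^sub>R n" using fb' unfolding f_def b_def by simp
  then have "N z = n" using tau by simp
  then have "z - q = dz *\<^sub>R n" using zq by simp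
  then have zpn: "z = p + dz *\<^sub>R n" using \<open>q = p\<close> by (metis add.commute diff_add_cancel)
  have "nb A p n dz" unfolding nb_def
  proof
    fix w assume "w \<in> A"
    then have "dz \<le> dist z w" unfolding dz_def by (rule infdist_le)
    then show "dz \<le> dist (p + dz *\<^sub>R n) w" using zpn by metis
  qed
  moreover have "dz < e" using zU unfolding dz_def U_def by simp
  ultimately show ?thesis using C1 by blast
qed

end


context pr begin

lemma ray:
  assumes p: "p \<in> A" and n: "norm n = 1" and s: "0 < s" "s < e" and nbs: "nb A p n s"
    and t: "0 \<le> t" "t < e"
  shows "nb A p n t"
proof (rule ccontr)
  assume nt: "\<not> nb A p n t"
  define G where "G = {t'. 0 \<le> t' \<and> t' < e \<and> nb A p n t'}"
  have Glt: "t' < t" if "t' \<in> G" for t'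
  proof (rule ccontr)
    assume "\<not> t' < t"
    then have "nb A p n t" using nb_mono[of A p n t' t] that n t unfolding G_def by auto
    then show False using nt by simp
  qed
  have sG: "s \<in> G" using s nbs unfolding G_def by auto
  have bdd: "bdd_above G" using Glt by (meson bdd_aboveI less_imp_le)
  define \<tau> where "\<tau> = Sup G"
  have st: "s \<le> \<tau>" unfolding \<tau>_def using sG bdd by (rule cSup_upper)
  have tt: "\<tau> \<le> t" unfolding \<tau>_def using sG Glt by (intro cSup_least) (auto intro: less_imp_le)
  have below: "nb A p n t1" if t1: "0 \<le> t1" "t1 < \<tau>" for t1
  proof -
    obtain t' where "t' \<in> G" "t1 < t'" using less_cSup_iff[of G t1] sG bdd t1(2) unfolding \<tau>_def by auto
    then show ?thesis using nb_mono[of A p n t' t1] n t1(1) unfolding G_def by auto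
  qed
  have nbtau: "nb A p n \<tau>" unfolding nb_def
  proof
    fix z assume zA: "z \<in> A"
    define D where "D = dist (p + \<tau> *\<^sub>R n) z"
    have key: "t1 \<le> D + (\<tau> - t1)" if "0 \<le> t1" "t1 < \<tau>" for t1
    proof -
      have "t1 \<le> dist (p + t1 *\<^sub>R n) z" using below[OF that] zA unfolding nb_def by auto
      also have "\<dots> \<le> dist (p + t1 *\<^sub>R n) (p + \<tau> *\<^sub>R n) + D" unfolding D_def by (rule dist_triangle)
      also have "dist (p + t1 *\<^sub>R n) (p + \<tau> *\<^sub>R n) = \<tau> - t1"
        using n that by (simp add: dist_norm scaleR_diff_left[symmetric])
      finally show ?thesis by simp
    qed
    show "\<tau> \<le> D"
    proof (rule ccontr)
      assume "\<not> \<tau> \<le> D"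
      moreover have "D \<ge> 0" unfolding D_def by simp
      ultimately have "0 \<le> (3 * \<tau> + D) / 4" "(3 * \<tau> + D) / 4 < \<tau>" using s st by auto
      from key[OF this] have "(3 * \<tau> + D) \<le> 4 * D + (4 * \<tau> - (3 * \<tau> + D))" by (simp add: field_simps)
      then show False using \<open>\<not> \<tau> \<le> D\<close> by linarith
    qed
  qed
  obtain t2 where t2: "\<tau> < t2" "t2 < e" "nb A p n t2"
    using ray_step[OF p n _ _ nbtau] s st tt t by auto
  then have "t2 \<in> G" unfolding G_def using s st by auto
  then have "t2 \<le> \<tau>" unfolding \<tau>_def using bdd by (rule cSup_upper)
  then show False using t2 by simp
qed

definition R where "R = e / 2"

lemma R_pos: "R > 0" "R < e" using e_pos unfolding R_def by auto

lemma P_normal: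
  assumes "x \<in> U" "x \<notin> A"
  shows "nb A (P x) ((1 / norm (x - P x)) *\<^sub>R (x - P x)) R"
proof -
  define p where "p = P x"
  define s where "s = dist x p"
  define n where "n = (1 / norm (x - p)) *\<^sub>R (x - p)"
  have pA: "p \<in> A" using P_near(2)[OF assms(1)] p_def by simp
  have sd: "s = infdist x A" using P_near(1)[OF assms(1)] p_def s_def by simp
  have spos: "s > 0" using sd assms A_closed A_ne infdist_pos_not_in_closed by auto
  have se: "s < e" using sd assms(1) U_def by simp
  have xp: "x - p \<noteq> 0" using spos s_def by auto
  have n1: "norm n = 1" unfolding n_def using xp by simp
  have psn: "p + s *\<^sub>R n = x" unfolding n_def s_def using xp by (simp add: dist_norm)
  have "nb A p n s" unfolding nb_def psn
  proof
    fix z assume "z \<in> A"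
    then show "s \<le> dist x z" using infdist_le[of z A x] sd by simp
  qed
  then have "nb A p n R" using ray[OF pA n1 spos se] R_pos by auto
  then show ?thesis unfolding p_def n_def .
qed

end


context pr begin

lemma step_basic:
  assumes xA: "x \<in> A" and v: "norm v = 1" and t: "0 < t" "t < e"
  shows "x + t *\<^sub>R v \<in> U" "P (x + t *\<^sub>R v) \<in> A"
    "(norm (P (x + t *\<^sub>R v) - x))\<^sup>2 \<le> 2 * t * (v \<bullet> (P (x + t *\<^sub>R v) - x))"
proof -
  define q where "q = x + t *\<^sub>R v"
  have dqx: "dist q x = t" unfolding q_def using v t by (simp add: dist_norm)
  have qU: "q \<in> U" using infdist_le[OF xA, of q] dqx t unfolding U_def by simp
  then show "x + t *\<^sub>R v \<in> U" unfolding q_def .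
  show "P (x + t *\<^sub>R v) \<in> A" using P_near(2)[OF qU] unfolding q_def .
  define w where "w = P q - x"
  have "dist q (P q) \<le> dist q x" using dist_P_le[of q x] qU xA unfolding U_def by simp
  then have "norm (t *\<^sub>R v - w) \<le> t" using dqx unfolding w_def q_def by (simp add: dist_norm algebra_simps)
  then have "(norm (t *\<^sub>R v - w))\<^sup>2 \<le> t\<^sup>2" using t by (simp add: power_mono)
  moreover have "(norm (t *\<^sub>R v - w))\<^sup>2 = t\<^sup>2 - 2 * t * (v \<bullet> w) + (norm w)\<^sup>2"
  proof -
    have vv: "v \<bullet> v = 1" using v by (simp add: norm_eq_1)
    have "(norm (t *\<^sub>R v - w))\<^sup>2 = (t *\<^sub>R v - w) \<bullet> (t *\<^sub>R v - w)" by (rule power2_norm_eq_inner)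
    also have "\<dots> = t * t * (v \<bullet> v) - 2 * t * (v \<bullet> w) + w \<bullet> w"
      by (simp add: inner_diff_left inner_diff_right inner_commute[of w v] algebra_simps)
    also have "\<dots> = t\<^sup>2 - 2 * t * (v \<bullet> w) + (norm w)\<^sup>2"
      using vv by (simp add: power2_norm_eq_inner[symmetric] power2_eq_square)
    finally show ?thesis .
  qed
  ultimately have "(norm w)\<^sup>2 \<le> 2 * t * (v \<bullet> w)" by simp
  then show "(norm (P (x + t *\<^sub>R v) - x))\<^sup>2 \<le> 2 * t * (v \<bullet> (P (x + t *\<^sub>R v) - x))"
    unfolding w_def q_def .
qed

lemma small_step:
  assumes xA: "x \<in> A" and v: "norm v = 1" and orth: "\<And>u. u \<in> Tan A x \<Longrightarrow> v \<bullet> u = 0"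
    and c: "c > 0"
  shows "\<exists>\<tau>>0. \<forall>t. 0 < t \<and> t < \<tau> \<longrightarrow> norm (P (x + t *\<^sub>R v) - x) \<le> c * t"
proof (rule ccontr)
  assume "\<not> ?thesis"
  then have "\<forall>i. \<exists>t. 0 < t \<and> t < min (1 / Suc i) e \<and> norm (P (x + t *\<^sub>R v) - x) > c * t"
    using e_pos by (metis not_le min_less_iff_conj of_nat_0_less_iff zero_less_Suc zero_less_divide_1_iff)
  then obtain T where T: "\<And>i. 0 < T i" "\<And>i. T i < 1 / Suc i" "\<And>i. T i < e"
    "\<And>i. norm (P (x + T i *\<^sub>R v) - x) > c * T i" by (metis min_less_iff_conj)
  define W where "W i = P (x + T i *\<^sub>R v) - x" for i
  have WA: "x + W i \<in> A" for i unfolding W_def using step_basic(2)[OF xA v T(1) T(3)] by simp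
  have Wsq: "(norm (W i))\<^sup>2 \<le> 2 * T i * (v \<bullet> W i)" for i
    unfolding W_def using step_basic(3)[OF xA v T(1) T(3)] .
  have Wpos: "norm (W i) > c * T i" for i unfolding W_def using T(4) .
  have Wnz: "norm (W i) > 0" for i using Wpos[of i] c T(1)[of i] by (smt (verit) mult_pos_pos)
  have Wle: "norm (W i) \<le> 2 * T i" for i
  proof -
    have "v \<bullet> W i \<le> norm (W i)" using Cauchy_Schwarz_ineq2[of v "W i"] v by simp
    then have "(norm (W i))\<^sup>2 \<le> 2 * T i * norm (W i)" using Wsq[of i] T(1)[of i]
      by (smt (verit) mult_left_mono)
    then show ?thesis using Wnz[of i] by (simp add: power2_eq_square)
  qed
  have vW: "v \<bullet> ((1 / norm (W i)) *\<^sub>R W i) \<ge> c / 2" for i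
  proof -
    have "(norm (W i))\<^sup>2 / norm (W i) \<le> 2 * T i * (v \<bullet> W i) / norm (W i)"
      using Wsq[of i] Wnz[of i] by (simp add: divide_right_mono)
    then have "norm (W i) \<le> 2 * T i * (v \<bullet> ((1 / norm (W i)) *\<^sub>R W i))"
      using Wnz[of i] by (simp add: power2_eq_square)
    then have "c * T i \<le> (2 * (v \<bullet> ((1 / norm (W i)) *\<^sub>R W i))) * T i" using Wpos[of i] by (simp add: algebra_simps)
    then have "c \<le> 2 * (v \<bullet> ((1 / norm (W i)) *\<^sub>R W i))" using T(1)[of i] by (rule mult_right_le_imp_le)
    then show ?thesis by linarith
  qed
  define V where "V i = (1 / norm (W i)) *\<^sub>R W i" for i
  have Vn: "norm (V i) = 1" for i unfolding V_def using Wnz[of i] by simp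
  have "\<forall>y\<in>range V. norm y \<le> 1" using Vn by auto
  then have "bounded (range V)" unfolding bounded_iff by blast
  then obtain l r where r: "strict_mono r" and lim: "(V \<circ> r) \<longlonglongrightarrow> l"
    using bounded_imp_convergent_subsequence by blast
  have W0: "W \<longlonglongrightarrow> 0"
  proof (rule tendsto_norm_zero_cancel, rule Lim_null_comparison[of _ "\<lambda>i. 2 / Suc i"])
    show "\<forall>\<^sub>F i in sequentially. norm (norm (W i)) \<le> 2 / Suc i"
    proof (intro always_eventually allI)
      fix i
      have "2 * T i \<le> 2 * (1 / Suc i)" using T(2)[of i] by simp
      then show "norm (norm (W i)) \<le> 2 / Suc i" using Wle[of i] by simp
    qed
    show "(\<lambda>i. 2 / real (Suc i)) \<longlonglongrightarrow> 0"
      using tendsto_mult_left_zero[OF LIMSEQ_inverse_real_of_nat, of 2] by (simp add: divide_inverse)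
  qed
  have "l \<in> Tan A x"
    unfolding Tan_def
  proof (intro CollectI disjI2 exI conjI allI)
    show "x + W (r i) \<in> A" for i using WA .
    show "x + W (r i) \<noteq> x" for i using Wnz[of "r i"] by auto
    show "1 / norm (W (r i)) > 0" for i using Wnz[of "r i"] by simp
    have "(W \<circ> r) \<longlonglongrightarrow> 0" using LIMSEQ_subseq_LIMSEQ[OF W0 r] .
    then have "(\<lambda>i. x + W (r i)) \<longlonglongrightarrow> x + 0" by (intro tendsto_intros) (simp add: o_def)
    then show "(\<lambda>i. x + W (r i)) \<longlonglongrightarrow> x" by simp
    show "(\<lambda>i. (1 / norm (W (r i))) *\<^sub>R (x + W (r i) - x)) \<longlonglongrightarrow> l"
      using lim unfolding V_def o_def by simp
  qed
  then have vl: "v \<bullet> l = 0" using orth by blast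
  have "(\<lambda>i. v \<bullet> (V \<circ> r) i) \<longlonglongrightarrow> v \<bullet> l" by (intro tendsto_intros lim)
  moreover have "\<forall>i. c / 2 \<le> v \<bullet> (V \<circ> r) i" using vW unfolding V_def o_def by simp
  ultimately have "c / 2 \<le> v \<bullet> l" by (intro LIMSEQ_le_const[of _ "v \<bullet> l" "c/2"]) auto
  then show False using vl c by simp
qed

end


context pr begin

lemma dual:
  assumes xA: "x \<in> A" and v: "norm v = 1" and orth: "\<And>u. u \<in> Tan A x \<Longrightarrow> v \<bullet> u = 0"
  shows "nb A x v R"
  unfolding nb_def
proof
  fix z assume zA: "z \<in> A"
  define D where "D = dist (x + R *\<^sub>R v) z"
  have key: "R - c * (1 + 2 * R) \<le> D" if c: "0 < c" "c < 1/2" for c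
  proof -
    obtain \<tau> where tau: "\<tau> > 0" "\<And>t. 0 < t \<Longrightarrow> t < \<tau> \<Longrightarrow> norm (P (x + t *\<^sub>R v) - x) \<le> c * t"
      using small_step[OF xA v orth c(1)] by blast
    define t where "t = min (\<tau>/2) (min (1/2) (e/2))"
    have t: "0 < t" "t < \<tau>" "t < e" "t \<le> 1" unfolding t_def using tau e_pos by auto
    define q where "q = x + t *\<^sub>R v"
    define p where "p = P q"
    define w where "w = p - x"
    have wle: "norm w \<le> c * t" using tau(2)[OF t(1,2)] unfolding w_def p_def q_def .
    have qU: "q \<in> U" unfolding q_def using step_basic(1)[OF xA v t(1,3)] .
    have qp: "q - p = t *\<^sub>R v - w" unfolding q_def w_def by simp
    have "norm (t *\<^sub>R v) \<le> norm (t *\<^sub>R v - w) + norm w"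
      using norm_triangle_ineq[of "t *\<^sub>R v - w" w] by simp
    then have nqp: "norm (q - p) \<ge> t - c * t" using qp wle v t by simp
    have ct: "c * t < t" using c t by simp
    then have nqp0: "norm (q - p) > 0" using nqp by linarith
    have qnA: "q \<notin> A"
    proof
      assume "q \<in> A"
      then have "infdist q A = 0" by simp
      then have "dist q p = 0" using P_near(1)[OF qU] p_def by simp
      then show False using nqp0 by (simp add: dist_norm)
    qed
    define N where "N = (1 / norm (q - p)) *\<^sub>R (q - p)"
    have nbN: "nb A p N R" using P_normal[OF qU qnA] unfolding N_def p_def .
    have "R \<le> dist (p + R *\<^sub>R N) z" using nbN zA unfolding nb_def by blast
    also have "\<dots> \<le> dist (p + R *\<^sub>R N) (x + R *\<^sub>R v) + D" unfolding D_def by (rule dist_triangle)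
    also have "dist (p + R *\<^sub>R N) (x + R *\<^sub>R v) \<le> c + 2 * R * c"
    proof -
      have vt: "v = (1 / norm (t *\<^sub>R v)) *\<^sub>R (t *\<^sub>R v)" using v t by simp
      have "norm (N - v) \<le> 2 * norm ((q - p) - t *\<^sub>R v) / norm (t *\<^sub>R v)"
        unfolding N_def by (subst vt, rule normalize_diff_le) (use v t in auto)
      also have "\<dots> = 2 * norm w / t" using qp v t by simp
      also have "\<dots> \<le> 2 * c" using wle t by (simp add: divide_le_eq mult.commute)
      finally have Nv: "norm (N - v) \<le> 2 * c" .
      have "dist (p + R *\<^sub>R N) (x + R *\<^sub>R v) = norm (w + R *\<^sub>R (N - v))"
        unfolding w_def dist_norm by (simp add: algebra_simps)
      also have "\<dots> \<le> norm w + R * norm (N - v)" using R_pos norm_triangle_ineq[of w "R *\<^sub>R (N - v)"] by simp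
      also have "\<dots> \<le> c * t + R * (2 * c)" using wle Nv R_pos by (intro add_mono mult_left_mono) auto
      also have "\<dots> \<le> c + 2 * R * c" using c t by (simp add: mult_left_le)
      finally show ?thesis .
    qed
    finally show ?thesis by (simp add: algebra_simps)
  qed
  show "R \<le> D"
  proof (rule ccontr)
    assume "\<not> R \<le> D"
    define c where "c = min (1/4) ((R - D) / (2 * (1 + 2 * R)))"
    have K: "1 + 2 * R > 0" using R_pos by simp
    have c: "0 < c" "c < 1/2" unfolding c_def using \<open>\<not> R \<le> D\<close> K by auto
    have "c * (1 + 2 * R) \<le> (R - D) / (2 * (1 + 2 * R)) * (1 + 2 * R)"
      unfolding c_def using K by (intro mult_right_mono) auto
    also have "\<dots> = (R - D) / 2" using K by (simp add: field_simps)
    finally have "c * (1 + 2 * R) \<le> (R - D) / 2" .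
    moreover have "R - c * (1 + 2 * R) \<le> D" using key[OF c] .
    ultimately have "R - D \<le> (R - D) / 2" by linarith
    then have "R - D \<le> 0" by simp
    then show False using \<open>\<not> R \<le> D\<close> by simp
  qed
qed

end


context pr begin

lemma two_sided:
  assumes yA: "y \<in> A" and v: "norm v = 1" and orth: "\<And>u. u \<in> span (Tan A y) \<Longrightarrow> v \<bullet> u = 0"
    and zA: "z \<in> A"
  shows "\<bar>v \<bullet> (z - y)\<bar> \<le> (norm (z - y))\<^sup>2 / (2 * R)"
proof -
  have o1: "\<And>u. u \<in> Tan A y \<Longrightarrow> v \<bullet> u = 0" using orth span_base by blast
  have o2: "\<And>u. u \<in> Tan A y \<Longrightarrow> (- v) \<bullet> u = 0" using o1 by simp
  have v2: "norm (- v) = 1" using v by simp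
  have "v \<bullet> (z - y) \<le> (norm (z - y))\<^sup>2 / (2 * R)"
    using nb_ineq[OF dual[OF yA v o1] v R_pos(1) zA] .
  moreover have "(- v) \<bullet> (z - y) \<le> (norm (z - y))\<^sup>2 / (2 * R)"
    using nb_ineq[OF dual[OF yA v2 o2] v2 R_pos(1) zA] .
  ultimately show ?thesis by (simp add: abs_le_iff)
qed

lemma almost_convex:
  assumes xA: "x \<in> A" and zA: "z \<in> A" and mu: "0 \<le> \<mu>" "\<mu> \<le> 1" and l: "dist x z \<le> R"
  shows "infdist (x + \<mu> *\<^sub>R (z - x)) A \<le> \<mu> * (dist x z)\<^sup>2 / R"
proof -
  define m where "m = x + \<mu> *\<^sub>R (z - x)"
  define \<delta> where "\<delta> = infdist m A"
  define ll where "ll = dist x z"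
  have dmx: "dist m x = \<mu> * ll" unfolding m_def ll_def using mu by (simp add: dist_norm norm_minus_commute)
  have dle: "\<delta> \<le> \<mu> * ll" using infdist_le[OF xA, of m] dmx \<delta>_def by simp
  have mul: "\<mu> * ll \<le> ll" using mu ll_def by (simp add: mult_left_le_one_le)
  have dR: "\<delta> \<le> R" using dle mul l ll_def by simp
  have mU: "m \<in> U" using dR R_pos unfolding U_def \<delta>_def by simp
  show ?thesis
  proof (cases "m \<in> A")
    case True
    then show ?thesis unfolding m_def[symmetric] using mu R_pos by simp
  next
    case False
    define p where "p = P m"
    define n where "n = (1 / norm (m - p)) *\<^sub>R (m - p)"
    have pA: "p \<in> A" using P_near(2)[OF mU] p_def by simp
    have dmp: "norm (m - p) = \<delta>" using P_near(1)[OF mU] p_def \<delta>_def by (simp add: dist_norm)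
    have dpos: "\<delta> > 0" using False A_closed A_ne infdist_pos_not_in_closed \<delta>_def by auto
    have nbn: "nb A p n R" using P_normal[OF mU False] unfolding n_def p_def .
    have n1: "norm n = 1" unfolding n_def using dmp dpos by simp
    define a where "a = x - p"
    define b where "b = z - p"
    have i1: "n \<bullet> a \<le> (norm a)\<^sup>2 / (2 * R)" using nb_ineq[OF nbn n1 R_pos(1) xA] a_def by simp
    have i2: "n \<bullet> b \<le> (norm b)\<^sup>2 / (2 * R)" using nb_ineq[OF nbn n1 R_pos(1) zA] b_def by simp
    have mp: "m - p = (1 - \<mu>) *\<^sub>R a + \<mu> *\<^sub>R b" unfolding m_def a_def b_def by (simp add: algebra_simps)
    have nmp: "n \<bullet> (m - p) = \<delta>"
    proof -
      have "n \<bullet> (m - p) = (1 / norm (m - p)) * ((m - p) \<bullet> (m - p))" unfolding n_def by simp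
      also have "(m - p) \<bullet> (m - p) = \<delta>\<^sup>2" using dmp by (simp add: power2_norm_eq_inner[symmetric])
      finally show ?thesis using dmp dpos by (simp add: power2_eq_square)
    qed
    have comb: "n \<bullet> (m - p) = (1 - \<mu>) * (n \<bullet> a) + \<mu> * (n \<bullet> b)"
      unfolding mp by (simp add: inner_add_right)
    have "(1 - \<mu>) * (n \<bullet> a) \<le> (1 - \<mu>) * ((norm a)\<^sup>2 / (2 * R))" by (rule mult_left_mono[OF i1]) (use mu in simp)
    moreover have "\<mu> * (n \<bullet> b) \<le> \<mu> * ((norm b)\<^sup>2 / (2 * R))" by (rule mult_left_mono[OF i2]) (use mu in simp)
    ultimately have S1: "\<delta> \<le> ((1 - \<mu>) * (norm a)\<^sup>2 + \<mu> * (norm b)\<^sup>2) / (2 * R)"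
      using nmp comb by (simp add: add_divide_distrib)
    have ident: "(1 - \<mu>) * (norm a)\<^sup>2 + \<mu> * (norm b)\<^sup>2 = (norm (m - p))\<^sup>2 + \<mu> * (1 - \<mu>) * (norm (a - b))\<^sup>2"
    proof -
      have "(norm (m - p))\<^sup>2 = ((1 - \<mu>) *\<^sub>R a + \<mu> *\<^sub>R b) \<bullet> ((1 - \<mu>) *\<^sub>R a + \<mu> *\<^sub>R b)"
        unfolding mp by (rule power2_norm_eq_inner)
      also have "\<dots> = (1 - \<mu>) * (1 - \<mu>) * (a \<bullet> a) + 2 * (1 - \<mu>) * \<mu> * (a \<bullet> b) + \<mu> * \<mu> * (b \<bullet> b)"
        by (simp add: inner_add_left inner_add_right inner_commute[of b a] algebra_simps)
      finally have e1: "(norm (m - p))\<^sup>2 = (1 - \<mu>) * (1 - \<mu>) * (a \<bullet> a) + 2 * (1 - \<mu>) * \<mu> * (a \<bullet> b) + \<mu> * \<mu> * (b \<bullet> b)" .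
      have e2: "(norm (a - b))\<^sup>2 = a \<bullet> a - 2 * (a \<bullet> b) + b \<bullet> b"
        unfolding power2_norm_eq_inner by (simp add: inner_diff_left inner_diff_right inner_commute[of b a])
      have e3: "(norm a)\<^sup>2 = a \<bullet> a" "(norm b)\<^sup>2 = b \<bullet> b" by (simp_all add: power2_norm_eq_inner)
      show ?thesis unfolding e1 e2 e3 by (simp add: algebra_simps)
    qed
    have abz: "norm (a - b) = ll" unfolding a_def b_def ll_def by (simp add: dist_norm)
    have S2: "2 * R * \<delta> \<le> \<delta>\<^sup>2 + \<mu> * (1 - \<mu>) * ll\<^sup>2"
    proof -
      have "\<delta> \<le> (\<delta>\<^sup>2 + \<mu> * (1 - \<mu>) * ll\<^sup>2) / (2 * R)" using S1 ident abz dmp by simp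
      then have "\<delta> * (2 * R) \<le> \<delta>\<^sup>2 + \<mu> * (1 - \<mu>) * ll\<^sup>2" using R_pos by (simp add: pos_le_divide_eq)
      then show ?thesis by (simp add: mult.commute)
    qed
    have "\<delta>\<^sup>2 \<le> R * \<delta>" using dR dpos by (simp add: power2_eq_square mult_right_mono)
    moreover have "\<mu> * (1 - \<mu>) * ll\<^sup>2 \<le> \<mu> * ll\<^sup>2"
    proof -
      have "(\<mu> * ll\<^sup>2) * (1 - \<mu>) \<le> \<mu> * ll\<^sup>2" using mu by (intro mult_left_le) auto
      then show ?thesis by (simp add: algebra_simps)
    qed
    ultimately have "R * \<delta> \<le> \<mu> * ll\<^sup>2" using S2 by (simp add: algebra_simps)
    then have "\<delta> \<le> \<mu> * ll\<^sup>2 / R" using R_pos by (simp add: le_divide_eq mult.commute)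
    then show ?thesis unfolding \<delta>_def ll_def m_def .
  qed
qed

end


lemma dual_basis:
  fixes B :: "'a::euclidean_space set"
  assumes fin: "finite B" and ind: "independent B"
  shows "\<exists>d. \<forall>b\<in>B. \<forall>b'\<in>B. d b \<bullet> b' = (if b = b' then 1 else 0)"
proof -
  have ex: "\<exists>w. w \<bullet> b = 1 \<and> (\<forall>b'\<in>B - {b}. w \<bullet> b' = 0)" if bB: "b \<in> B" for b
  proof -
    obtain y z where y: "y \<in> span (B - {b})" and z: "\<And>w. w \<in> span (B - {b}) \<Longrightarrow> orthogonal z w"
      and byz: "b = y + z"
      using orthogonal_subspace_decomp_exists[of "B - {b}" b] by blast
    have nsp: "b \<notin> span (B - {b})"
    proof
      assume "b \<in> span (B - {b})"
      then have "dependent B" unfolding dependent_def using bB by blast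
      then show False using ind by blast
    qed
    have znz: "z \<noteq> 0"
    proof
      assume "z = 0"
      then have "b = y" using byz by simp
      then show False using y nsp by simp
    qed
    have zy: "z \<bullet> y = 0" using z[OF y] unfolding orthogonal_def .
    have zb: "z \<bullet> b = z \<bullet> z" unfolding byz using zy by (simp add: inner_add_right)
    have zz: "z \<bullet> z > 0" using znz by (rule inner_gt_zero_iff[THEN iffD2])
    define w where "w = (1 / (z \<bullet> z)) *\<^sub>R z"
    have "w \<bullet> b = 1" unfolding w_def using zb zz by simp
    moreover have "w \<bullet> b' = 0" if "b' \<in> B - {b}" for b'
    proof -
      have "b' \<in> span (B - {b})" using that by (rule span_base)
      then have "z \<bullet> b' = 0" using z unfolding orthogonal_def by blast
      then show ?thesis unfolding w_def by simp
    qed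
    ultimately show ?thesis by (intro exI[of _ w]) simp
  qed
  have "\<forall>b\<in>B. \<exists>w. w \<bullet> b = 1 \<and> (\<forall>b'\<in>B - {b}. w \<bullet> b' = 0)" using ex by blast
  then obtain d where d0: "\<forall>b\<in>B. d b \<bullet> b = 1 \<and> (\<forall>b'\<in>B - {b}. d b \<bullet> b' = 0)"
    using bchoice[of B "\<lambda>b w. w \<bullet> b = 1 \<and> (\<forall>b'\<in>B - {b}. w \<bullet> b' = 0)"] by blast
  have d: "\<And>b. b \<in> B \<Longrightarrow> d b \<bullet> b = 1 \<and> (\<forall>b'\<in>B - {b}. d b \<bullet> b' = 0)" using d0 by blast
  show ?thesis
  proof (intro exI ballI)
    fix b b' assume "b \<in> B" "b' \<in> B"
    then show "d b \<bullet> b' = (if b = b' then 1 else 0)"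
    proof (cases "b = b'")
      case True
      then show ?thesis using d[OF \<open>b \<in> B\<close>] by simp
    next
      case False
      then have "b' \<in> B - {b}" using \<open>b' \<in> B\<close> by simp
      then show ?thesis using d[OF \<open>b \<in> B\<close>] False by simp
    qed
  qed
qed

lemma coeff_bound:
  fixes B :: "'a::euclidean_space set"
  assumes fin: "finite B" and ind: "independent B"
  shows "\<exists>M>0. \<forall>c. (\<Sum>b\<in>B. \<bar>c b\<bar>) \<le> M * norm (\<Sum>b\<in>B. c b *\<^sub>R b)"
proof -
  obtain d where d: "\<And>b b'. b \<in> B \<Longrightarrow> b' \<in> B \<Longrightarrow> d b \<bullet> b' = (if b = b' then 1 else 0)"
    using dual_basis[OF fin ind] by blast
  define M where "M = 1 + (\<Sum>b\<in>B. norm (d b))"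
  have "(\<Sum>b\<in>B. norm (d b)) \<ge> 0" by (rule sum_nonneg) simp
  then have Mpos: "M > 0" unfolding M_def by linarith
  have "(\<Sum>b\<in>B. \<bar>c b\<bar>) \<le> M * norm (\<Sum>b\<in>B. c b *\<^sub>R b)" for c
  proof -
    define s where "s = (\<Sum>b\<in>B. c b *\<^sub>R b)"
    have cb: "c b = d b \<bullet> s" if "b \<in> B" for b
    proof -
      have "d b \<bullet> s = (\<Sum>b'\<in>B. c b' * (d b \<bullet> b'))" unfolding s_def by (simp add: inner_sum_right)
      also have "\<dots> = (\<Sum>b'\<in>B. if b = b' then c b' else 0)"
        by (rule sum.cong) (use d that in auto)
      also have "\<dots> = c b" using fin that by simp
      finally show ?thesis by simp
    qed
    have "(\<Sum>b\<in>B. \<bar>c b\<bar>) \<le> (\<Sum>b\<in>B. norm (d b) * norm s)"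
    proof (rule sum_mono)
      fix b assume "b \<in> B"
      then show "\<bar>c b\<bar> \<le> norm (d b) * norm s" using cb Cauchy_Schwarz_ineq2[of "d b" s] by simp
    qed
    also have "\<dots> = (\<Sum>b\<in>B. norm (d b)) * norm s" by (simp add: sum_distrib_right)
    also have "\<dots> \<le> M * norm s" unfolding M_def by (simp add: mult_right_mono)
    finally show ?thesis unfolding s_def .
  qed
  then show ?thesis using Mpos by blast
qed

lemma perturb_bound:
  fixes B :: "'a::euclidean_space set"
    and H :: "'a \<Rightarrow> 'a"
  assumes fin: "finite B" and M: "\<And>c. (\<Sum>b\<in>B. \<bar>c b\<bar>) \<le> M * norm (\<Sum>b\<in>B. c b *\<^sub>R b)"
    and H: "\<And>b. b \<in> B \<Longrightarrow> norm (H b - b) \<le> \<kappa>" and small: "\<kappa> * M \<le> 1/2" and Mpos: "M > 0"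
  shows "(\<Sum>b\<in>B. \<bar>c b\<bar>) \<le> 2 * M * norm (\<Sum>b\<in>B. c b *\<^sub>R H b)"
proof -
  have T1: "norm (\<Sum>b\<in>B. c b *\<^sub>R b) \<le> norm (\<Sum>b\<in>B. c b *\<^sub>R H b) + norm (\<Sum>b\<in>B. c b *\<^sub>R (b - H b))"
  proof -
    have "(\<Sum>b\<in>B. c b *\<^sub>R b) = (\<Sum>b\<in>B. c b *\<^sub>R H b) + (\<Sum>b\<in>B. c b *\<^sub>R (b - H b))"
      by (simp add: sum.distrib[symmetric] algebra_simps)
    then show ?thesis by (metis norm_triangle_ineq)
  qed
  have T2: "norm (\<Sum>b\<in>B. c b *\<^sub>R (b - H b)) \<le> (\<Sum>b\<in>B. \<bar>c b\<bar> * \<kappa>)"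
  proof -
    have "norm (\<Sum>b\<in>B. c b *\<^sub>R (b - H b)) \<le> (\<Sum>b\<in>B. norm (c b *\<^sub>R (b - H b)))" by (rule norm_sum)
    also have "\<dots> \<le> (\<Sum>b\<in>B. \<bar>c b\<bar> * \<kappa>)"
    proof (rule sum_mono)
      fix b assume "b \<in> B"
      then have "norm (b - H b) \<le> \<kappa>" using H by (simp add: norm_minus_commute)
      then show "norm (c b *\<^sub>R (b - H b)) \<le> \<bar>c b\<bar> * \<kappa>" by (simp add: mult_left_mono)
    qed
    finally show ?thesis .
  qed
  have "norm (\<Sum>b\<in>B. c b *\<^sub>R b) \<le> norm (\<Sum>b\<in>B. c b *\<^sub>R H b) + (\<Sum>b\<in>B. \<bar>c b\<bar> * \<kappa>)"
    using T1 T2 by linarith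
  moreover have "(\<Sum>b\<in>B. \<bar>c b\<bar> * \<kappa>) = \<kappa> * (\<Sum>b\<in>B. \<bar>c b\<bar>)"
    by (simp add: sum_distrib_left mult.commute)
  ultimately have "norm (\<Sum>b\<in>B. c b *\<^sub>R b) \<le> norm (\<Sum>b\<in>B. c b *\<^sub>R H b) + \<kappa> * (\<Sum>b\<in>B. \<bar>c b\<bar>)" by simp
  then have "M * norm (\<Sum>b\<in>B. c b *\<^sub>R b) \<le> M * (norm (\<Sum>b\<in>B. c b *\<^sub>R H b) + \<kappa> * (\<Sum>b\<in>B. \<bar>c b\<bar>))"
    using Mpos by (intro mult_left_mono) auto
  then have "M * norm (\<Sum>b\<in>B. c b *\<^sub>R b) \<le> M * norm (\<Sum>b\<in>B. c b *\<^sub>R H b) + (\<kappa> * M) * (\<Sum>b\<in>B. \<bar>c b\<bar>)"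
    by (simp add: algebra_simps)
  moreover have "(\<kappa> * M) * (\<Sum>b\<in>B. \<bar>c b\<bar>) \<le> (1/2) * (\<Sum>b\<in>B. \<bar>c b\<bar>)"
    using small by (intro mult_right_mono) (auto intro: sum_nonneg)
  ultimately show ?thesis using M[of c] by linarith
qed

lemma perturb_span:
  fixes B :: "'a::euclidean_space set"
    and H :: "'a \<Rightarrow> 'a"
  assumes fin: "finite B" and K: "\<And>c. (\<Sum>b\<in>B. \<bar>c b\<bar>) \<le> K * norm (\<Sum>b\<in>B. c b *\<^sub>R H b)"
    and HS: "\<And>b. b \<in> B \<Longrightarrow> H b \<in> span S" and dS: "dim S = card B"
    and u: "u \<in> span S"
  shows "\<exists>c. u = (\<Sum>b\<in>B. c b *\<^sub>R H b)"
proof -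
  have inj: "inj_on H B"
  proof
    fix b b' assume bb: "b \<in> B" "b' \<in> B" "H b = H b'"
    show "b = b'"
    proof (rule ccontr)
      assume ne: "b \<noteq> b'"
      define c where "c x = (if x = b then 1 else 0) - (if x = b' then 1 else (0::real))" for x
      have "(\<Sum>x\<in>B. c x *\<^sub>R H x) = (\<Sum>x\<in>B. (if x = b then H x else 0) - (if x = b' then H x else 0))"
        by (rule sum.cong) (auto simp: c_def)
      also have "\<dots> = (\<Sum>x\<in>B. (if x = b then H x else 0)) - (\<Sum>x\<in>B. (if x = b' then H x else 0))"
        by (rule sum_subtractf)
      also have "\<dots> = H b - H b'" using fin bb by (simp add: sum.delta)
      also have "\<dots> = 0" using bb by simp
      finally have "(\<Sum>x\<in>B. \<bar>c x\<bar>) \<le> 0" using K[of c] by simp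
      moreover have "(\<Sum>x\<in>B. \<bar>c x\<bar>) \<ge> \<bar>c b\<bar>"
        using fin bb by (intro member_le_sum) auto
      moreover have "c b = 1" unfolding c_def using ne by simp
      ultimately show False by simp
    qed
  qed
  have ind: "independent (H ` B)"
  proof
    assume "dependent (H ` B)"
    then obtain f where f: "\<exists>v\<in>H ` B. f v \<noteq> 0" "(\<Sum>v\<in>H ` B. f v *\<^sub>R v) = 0"
      using dependent_finite[of "H ` B"] fin by auto
    have "(\<Sum>b\<in>B. f (H b) *\<^sub>R H b) = 0" using f(2) sum.reindex[OF inj, of "\<lambda>v. f v *\<^sub>R v"] by simp
    then have "(\<Sum>b\<in>B. \<bar>f (H b)\<bar>) \<le> 0" using K[of "\<lambda>b. f (H b)"] by simp
    moreover have "(\<Sum>b\<in>B. \<bar>f (H b)\<bar>) \<ge> 0" by (rule sum_nonneg) simp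
    ultimately have "(\<Sum>b\<in>B. \<bar>f (H b)\<bar>) = 0" by linarith
    then have "\<forall>b\<in>B. \<bar>f (H b)\<bar> = 0" using sum_nonneg_eq_0_iff[OF fin, of "\<lambda>b. \<bar>f (H b)\<bar>"] by simp
    then show False using f(1) by auto
  qed
  have card: "card (H ` B) = card B" using card_image[OF inj] .
  have "span S \<subseteq> span (H ` B)"
    using card_ge_dim_independent[of "H ` B" "span S"] HS ind card dS by auto
  then have "u \<in> span (H ` B)" using u by blast
  then obtain f where "u = (\<Sum>v\<in>H ` B. f v *\<^sub>R v)" using span_finite[of "H ` B"] fin by auto
  then have "u = (\<Sum>b\<in>B. f (H b) *\<^sub>R H b)" using sum.reindex[OF inj, of "\<lambda>v. f v *\<^sub>R v"] by simp
  then show ?thesis by (rule exI[of _ "\<lambda>b. f (H b)"])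
qed



lemma tangent_direction:
  fixes a b :: "'a::euclidean_space"
  assumes bT: "b \<in> Tan S a" and bnz: "b \<noteq> 0" and eta: "\<eta> > 0" and l: "l > 0"
  shows "\<exists>z\<in>S. 0 < dist z a \<and> dist z a \<le> l \<and>
           norm ((1 / dist z a) *\<^sub>R (z - a) - (1 / norm b) *\<^sub>R b) \<le> \<eta>"
proof -
  obtain xs r where xs: "\<And>i. xs i \<in> S" "\<And>i. xs i \<noteq> a" "\<And>i. r i > 0"
    and xa: "xs \<longlonglongrightarrow> a" and rb: "(\<lambda>i. r i *\<^sub>R (xs i - a)) \<longlonglongrightarrow> b"
    using bT bnz unfolding Tan_def by blast
  have nb: "norm b > 0" using bnz by simp
  have e1: "\<forall>\<^sub>F i in sequentially. dist (r i *\<^sub>R (xs i - a)) b < \<eta> * norm b / 2"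
  proof -
    have "\<eta> * norm b / 2 > 0" using nb eta by simp
    then show ?thesis using rb unfolding tendsto_iff by blast
  qed
  have e2: "\<forall>\<^sub>F i in sequentially. dist (xs i) a < l"
    using xa l unfolding tendsto_iff by blast
  obtain i where i1: "dist (r i *\<^sub>R (xs i - a)) b < \<eta> * norm b / 2" and i2: "dist (xs i) a < l"
    using eventually_happens'[OF _ eventually_conj[OF e1 e2]] by auto
  define d where "d = xs i - a"
  have dnz: "d \<noteq> 0" using xs(2)[of i] d_def by simp
  have norm_eq: "(1 / norm (r i *\<^sub>R d)) *\<^sub>R (r i *\<^sub>R d) = (1 / norm d) *\<^sub>R d"
    using xs(3)[of i] dnz by simp
  have "norm ((1 / norm (r i *\<^sub>R d)) *\<^sub>R (r i *\<^sub>R d) - (1 / norm b) *\<^sub>R b) \<le> 2 * norm (r i *\<^sub>R d - b) / norm b"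
    using normalize_diff_le bnz by blast
  also have "\<dots> \<le> 2 * (\<eta> * norm b / 2) / norm b"
    using i1 nb unfolding d_def by (intro divide_right_mono mult_left_mono) (auto simp: dist_norm)
  also have "\<dots> = \<eta>" using nb by simp
  finally have "norm ((1 / norm d) *\<^sub>R d - (1 / norm b) *\<^sub>R b) \<le> \<eta>" unfolding norm_eq .
  moreover have "dist (xs i) a = norm d" unfolding d_def by (simp add: dist_norm)
  ultimately show ?thesis using xs(1)[of i] dnz i2 unfolding d_def by (intro bexI[of _ "xs i"]) auto
qed



context pr begin

context
  fixes a :: 'a and B :: "'a set" and M Bm \<eta> lmax lmin \<delta> :: real and Z :: "'a \<Rightarrow> 'a"
  assumes aA: "a \<in> A" and finB: "finite B"
    and Mpos: "M > 0" and Bmpos: "Bm > 0" and Bm: "\<And>b. b \<in> B \<Longrightarrow> norm b \<le> Bm"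
    and bnz: "\<And>b. b \<in> B \<Longrightarrow> b \<noteq> 0"
    and ZA: "\<And>b. b \<in> B \<Longrightarrow> Z b \<in> A"
    and Zl: "\<And>b. b \<in> B \<Longrightarrow> lmin \<le> dist (Z b) a \<and> dist (Z b) a \<le> lmax"
    and Zdir: "\<And>b. b \<in> B \<Longrightarrow> norm ((1 / dist (Z b) a) *\<^sub>R (Z b - a) - (1 / norm b) *\<^sub>R b) \<le> \<eta>"
    and eta: "\<eta> = 1 / (48 * M * Bm)"
    and lmaxR: "lmax \<le> R / 2" and lmaxM: "lmax \<le> R / (32 * M * Bm)" and lminpos: "lmin > 0"
    and d1: "\<delta> \<le> \<eta> * lmin" and d2: "\<delta> \<le> lmin / 4" and d3: "\<delta> \<le> R / (80 * M * Bm)"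
begin

lemma spread:
  assumes xA: "x \<in> A" and xa: "dist a x < \<delta>" and lam: "0 < sl" "sl < 2 * \<delta>" and bB: "b \<in> B"
  shows "\<exists>w\<in>A. norm (w - x) \<le> 2 * sl \<and> norm ((norm b / sl) *\<^sub>R (w - x) - b) \<le> 1 / (8 * M)"
proof -
  define z where "z = Z b"
  define l where "l = dist z a"
  define l' where "l' = dist x z"
  have zA: "z \<in> A" using ZA[OF bB] z_def by simp
  have lb: "lmin \<le> l" "l \<le> lmax" using Zl[OF bB] unfolding l_def z_def by auto
  have lmm: "lmin \<le> lmax" using lb by simp
  have l'1: "l' \<le> l + \<delta>" unfolding l'_def l_def using dist_triangle[of x z a] xa by (simp add: dist_commute)
  have l'2: "l - \<delta> \<le> l'" unfolding l'_def l_def using dist_triangle[of z a x] xa by (simp add: dist_commute)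
  have lam_l': "sl < l'" using l'2 lb d2 lam by linarith
  have l'pos: "l' > 0" using lam_l' lam by simp
  have l'R: "l' \<le> R" using l'1 lb d2 lmaxR lmm lminpos by linarith
  define \<mu> where "\<mu> = sl / l'"
  have mu: "0 \<le> \<mu>" "\<mu> \<le> 1" unfolding \<mu>_def using lam l'pos lam_l' by auto
  define m where "m = x + \<mu> *\<^sub>R (z - x)"
  have ac: "infdist m A \<le> \<mu> * (dist x z)\<^sup>2 / R"
    unfolding m_def using almost_convex[OF xA zA mu] l'R l'_def by simp
  have "\<mu> * (dist x z)\<^sup>2 / R = sl * l' / R" unfolding \<mu>_def l'_def[symmetric] using l'pos
    by (simp add: power2_eq_square)
  also have "\<dots> \<le> sl * (2 * lmax) / R" using l'1 lb d2 lmm lminpos lam R_pos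
    by (intro divide_right_mono mult_left_mono) auto
  finally have ac2: "infdist m A \<le> sl * (2 * lmax) / R" using ac by linarith
  have lamR: "sl * (2 * lmax) / R \<le> sl"
  proof -
    have "sl * (2 * lmax) \<le> sl * R" using lmaxR lam by (intro mult_left_mono) auto
    then show ?thesis using R_pos by (simp add: divide_le_eq)
  qed
  have lame: "sl < e" using lam d2 lb lmaxR R_pos lmm by linarith
  have mU: "m \<in> U" using ac2 lamR lame unfolding U_def by simp
  define w where "w = P m"
  have wA: "w \<in> A" using P_near(2)[OF mU] w_def by simp
  have dmw: "norm (w - m) \<le> sl * (2 * lmax) / R"
    using P_near(1)[OF mU] ac2 w_def by (simp add: dist_norm norm_minus_commute)
  have mx: "m - x = sl *\<^sub>R ((1 / l') *\<^sub>R (z - x))" unfolding m_def \<mu>_def by simp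
  have nzx: "norm (z - x) = l'" unfolding l'_def by (simp add: dist_norm norm_minus_commute)
  have nmx: "norm (m - x) = sl" unfolding mx using nzx l'pos lam by simp
  have wx: "norm (w - x) \<le> 2 * sl"
  proof -
    have "norm (w - x) \<le> norm (w - m) + norm (m - x)" using norm_triangle_ineq[of "w - m" "m - x"] by simp
    then show ?thesis using dmw lamR nmx by linarith
  qed
  define g where "g = (1 / l') *\<^sub>R (z - x)"
  have g1: "norm (g - (1 / l) *\<^sub>R (z - a)) \<le> 2 * \<eta>"
  proof -
    have za: "norm (z - a) = l" unfolding l_def by (simp add: dist_norm)
    have lpos: "l > 0" using lb lminpos by simp
    have "norm (g - (1 / l) *\<^sub>R (z - a)) \<le> 2 * norm ((z - x) - (z - a)) / norm (z - a)"
    proof -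
      have "z - a \<noteq> 0" using za lpos by auto
      then show ?thesis unfolding g_def using normalize_diff_le[of "z - a" "z - x"] za nzx by simp
    qed
    also have "\<dots> = 2 * dist a x / l" using za by (simp add: dist_norm)
    also have "\<dots> \<le> 2 * (\<eta> * lmin) / lmin"
    proof -
      have "2 * dist a x / l \<le> 2 * dist a x / lmin" using lb lminpos by (intro divide_left_mono) auto
      also have "\<dots> \<le> 2 * (\<eta> * lmin) / lmin" using xa d1 lminpos by (intro divide_right_mono) auto
      finally show ?thesis .
    qed
    also have "\<dots> = 2 * \<eta>" using lminpos by simp
    finally show ?thesis .
  qed
  have g2: "norm ((1 / l) *\<^sub>R (z - a) - (1 / norm b) *\<^sub>R b) \<le> \<eta>" using Zdir[OF bB] unfolding l_def z_def .
  have wxl: "(1 / sl) *\<^sub>R (w - x) = (1 / sl) *\<^sub>R (w - m) + g"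
  proof -
    have "w - x = (w - m) + (m - x)" by simp
    also have "m - x = sl *\<^sub>R g" unfolding g_def using mx by simp
    finally have "w - x = (w - m) + sl *\<^sub>R g" .
    then have "(1 / sl) *\<^sub>R (w - x) = (1 / sl) *\<^sub>R ((w - m) + sl *\<^sub>R g)" by (rule arg_cong)
    also have "\<dots> = (1 / sl) *\<^sub>R (w - m) + g" using lam by (simp only: scaleR_add_right scaleR_scaleR) simp
    finally show ?thesis .
  qed
  have g3: "norm ((1 / sl) *\<^sub>R (w - m)) \<le> 2 * lmax / R"
  proof -
    have "norm ((1 / sl) *\<^sub>R (w - m)) = norm (w - m) / sl" using lam by simp
    also have "\<dots> \<le> (sl * (2 * lmax) / R) / sl" using dmw lam by (intro divide_right_mono) auto
    also have "\<dots> = 2 * lmax / R" using lam by simp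
    finally show ?thesis .
  qed
  have tot: "norm ((1 / sl) *\<^sub>R (w - x) - (1 / norm b) *\<^sub>R b) \<le> 3 * \<eta> + 2 * lmax / R"
  proof -
    have "(1 / sl) *\<^sub>R (w - x) - (1 / norm b) *\<^sub>R b
        = (1 / sl) *\<^sub>R (w - m) + (g - (1 / l) *\<^sub>R (z - a)) + ((1 / l) *\<^sub>R (z - a) - (1 / norm b) *\<^sub>R b)"
      unfolding wxl by simp
    also have "norm \<dots> \<le> norm ((1 / sl) *\<^sub>R (w - m)) + norm (g - (1 / l) *\<^sub>R (z - a)) + norm ((1 / l) *\<^sub>R (z - a) - (1 / norm b) *\<^sub>R b)"
      by (rule order_trans[OF norm_triangle_ineq add_right_mono[OF norm_triangle_ineq]])
    finally show ?thesis using g1 g2 g3 by linarith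
  qed
  have hb: "(norm b / sl) *\<^sub>R (w - x) - b = norm b *\<^sub>R ((1 / sl) *\<^sub>R (w - x) - (1 / norm b) *\<^sub>R b)"
    using bnz[OF bB] by (simp add: algebra_simps)
  have "norm ((norm b / sl) *\<^sub>R (w - x) - b) \<le> Bm * (3 * \<eta> + 2 * lmax / R)"
    unfolding hb using tot Bm[OF bB] by (simp add: mult_mono' \<open>\<eta> = _\<close>)
  also have "\<dots> \<le> 1 / (8 * M)"
  proof -
    have "Bm * (3 * \<eta>) = 1 / (16 * M)" unfolding eta using Bmpos Mpos by (simp add: field_simps)
    moreover have "Bm * (2 * lmax / R) \<le> 1 / (16 * M)"
    proof -
      have "2 * lmax \<le> 2 * (R / (32 * M * Bm))" using lmaxM by linarith
      then have "2 * lmax / R \<le> 2 * (R / (32 * M * Bm)) / R" using R_pos by (intro divide_right_mono) auto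
      also have "\<dots> = 1 / (16 * M * Bm)" using R_pos by (simp add: field_simps)
      finally show ?thesis using Bmpos Mpos by (simp add: field_simps)
    qed
    ultimately show ?thesis by (simp add: distrib_left)
  qed
  finally show ?thesis using wA wx by blast
qed


lemma core:
  assumes Mc: "\<And>c. (\<Sum>b\<in>B. \<bar>c b\<bar>) \<le> M * norm (\<Sum>b\<in>B. c b *\<^sub>R b)"
    and xA: "x \<in> A" and xk: "dim (Tan A x) = card B" and xa: "dist a x < \<delta>"
    and yA: "y \<in> A" and ya: "dist a y < \<delta>"
    and xy: "x \<noteq> y"
    and u: "u \<in> span (Tan A x)" "norm u = 1"
  shows "infdist u (span (Tan A y)) \<le> (20 * M * Bm / R) * dist x y"
proof -
  define \<rho> where "\<rho> = dist x y"
  have rpos: "\<rho> > 0" using xy \<rho>_def by simp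
  have r2d: "\<rho> < 2 * \<delta>" using dist_triangle[of x y a] xa ya unfolding \<rho>_def by (simp add: dist_commute)
  have "\<forall>b\<in>B. \<exists>w. w \<in> A \<and> norm (w - x) \<le> 2 * \<rho> \<and> norm ((norm b / \<rho>) *\<^sub>R (w - x) - b) \<le> 1 / (8 * M)"
    using spread[OF xA xa rpos r2d] by blast
  then obtain W where W: "\<forall>b\<in>B. W b \<in> A \<and> norm (W b - x) \<le> 2 * \<rho> \<and> norm ((norm b / \<rho>) *\<^sub>R (W b - x) - b) \<le> 1 / (8 * M)"
    using bchoice[of B "\<lambda>b w. w \<in> A \<and> norm (w - x) \<le> 2 * \<rho> \<and> norm ((norm b / \<rho>) *\<^sub>R (w - x) - b) \<le> 1 / (8 * M)"] by blast
  define h where "h b = (norm b / \<rho>) *\<^sub>R (W b - x)" for b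
  define C where "C = 5 * Bm * \<rho> / R"
  have nbnd: "\<bar>v \<bullet> h b\<bar> \<le> C"
    if y'A: "y' \<in> A" and y'd: "dist x y' \<le> \<rho>" and v: "norm v = 1"
      and vo: "\<And>t. t \<in> span (Tan A y') \<Longrightarrow> v \<bullet> t = 0" and bB: "b \<in> B" for y' v b
  proof -
    have Wb: "W b \<in> A" "norm (W b - x) \<le> 2 * \<rho>" using W bB by auto
    have t1: "\<bar>v \<bullet> (W b - y')\<bar> \<le> (norm (W b - y'))\<^sup>2 / (2 * R)" using two_sided[OF y'A v vo Wb(1)] .
    have t2: "\<bar>v \<bullet> (x - y')\<bar> \<le> (norm (x - y'))\<^sup>2 / (2 * R)" using two_sided[OF y'A v vo xA] .
    have n1: "norm (W b - y') \<le> 3 * \<rho>"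
    proof -
      have "norm (W b - y') \<le> norm (W b - x) + norm (x - y')" using norm_triangle_ineq[of "W b - x" "x - y'"] by simp
      then show ?thesis using Wb(2) y'd by (simp add: dist_norm)
    qed
    have n2: "norm (x - y') \<le> \<rho>" using y'd by (simp add: dist_norm)
    have s1: "(norm (W b - y'))\<^sup>2 \<le> (3 * \<rho>)\<^sup>2" using n1 by (intro power_mono) auto
    have s2: "(norm (x - y'))\<^sup>2 \<le> \<rho>\<^sup>2" using n2 by (intro power_mono) auto
    have "v \<bullet> (W b - x) = v \<bullet> (W b - y') - v \<bullet> (x - y')" by (simp add: inner_diff_right)
    then have "\<bar>v \<bullet> (W b - x)\<bar> \<le> \<bar>v \<bullet> (W b - y')\<bar> + \<bar>v \<bullet> (x - y')\<bar>" by linarith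
    also have "\<dots> \<le> (norm (W b - y'))\<^sup>2 / (2 * R) + (norm (x - y'))\<^sup>2 / (2 * R)" using t1 t2 by linarith
    also have "\<dots> \<le> (3 * \<rho>)\<^sup>2 / (2 * R) + \<rho>\<^sup>2 / (2 * R)"
      using s1 s2 R_pos by (intro add_mono divide_right_mono) auto
    also have "\<dots> = 5 * \<rho>\<^sup>2 / R" using R_pos by (simp add: field_simps power2_eq_square)
    finally have vw: "\<bar>v \<bullet> (W b - x)\<bar> \<le> 5 * \<rho>\<^sup>2 / R" .
    have "\<bar>v \<bullet> h b\<bar> = (norm b / \<rho>) * \<bar>v \<bullet> (W b - x)\<bar>" unfolding h_def using rpos by (simp add: abs_mult)
    also have "\<dots> \<le> (Bm / \<rho>) * (5 * \<rho>\<^sup>2 / R)"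
      using vw Bm[OF bB] rpos Bmpos by (intro mult_mono divide_right_mono) auto
    also have "\<dots> = C" unfolding C_def using rpos by (simp add: power2_eq_square)
    finally show ?thesis .
  qed
  have Cle: "C \<le> 1 / (8 * M)"
  proof -
    have "C \<le> 5 * Bm * (2 * \<delta>) / R" unfolding C_def using r2d Bmpos R_pos by (intro divide_right_mono mult_left_mono) auto
    also have "\<dots> \<le> 5 * Bm * (2 * (R / (80 * M * Bm))) / R" using d3 Bmpos R_pos by (intro divide_right_mono mult_left_mono) auto
    also have "\<dots> = 1 / (8 * M)" using Bmpos Mpos R_pos by (simp add: field_simps)
    finally show ?thesis .
  qed
  have "\<forall>b\<in>B. \<exists>Hb. Hb \<in> span (Tan A x) \<and> norm (h b - Hb) \<le> C"
  proof
    fix b assume bB: "b \<in> B"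
    obtain p r where p: "p \<in> span (Tan A x)" and r: "\<And>w. w \<in> span (Tan A x) \<Longrightarrow> orthogonal r w"
      and hpr: "h b = p + r"
      using orthogonal_subspace_decomp_exists[of "Tan A x" "h b"] by metis
    have "norm r \<le> C"
    proof (cases "r = 0")
      case True
      then show ?thesis using Cle Cle C_def rpos Bmpos R_pos by simp
    next
      case False
      define v where "v = (1 / norm r) *\<^sub>R r"
      have v1: "norm v = 1" unfolding v_def using False by simp
      have vo: "v \<bullet> t = 0" if "t \<in> span (Tan A x)" for t
        using r[OF that] unfolding v_def orthogonal_def by simp
      have "v \<bullet> h b = norm r"
      proof -
        have "v \<bullet> h b = v \<bullet> p + v \<bullet> r" unfolding hpr by (simp add: inner_add_right)
        also have "v \<bullet> p = 0" using vo[OF p] .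
        also have "v \<bullet> r = norm r" unfolding v_def using False by (simp add: power2_norm_eq_inner[symmetric] power2_eq_square)
        finally show ?thesis by simp
      qed
      then show ?thesis using nbnd[OF xA _ v1 vo bB] rpos by simp
    qed
    then show "\<exists>Hb. Hb \<in> span (Tan A x) \<and> norm (h b - Hb) \<le> C" using p hpr by (intro exI[of _ p]) simp
  qed
  then obtain H where H: "\<forall>b\<in>B. H b \<in> span (Tan A x) \<and> norm (h b - H b) \<le> C"
    using bchoice[of B "\<lambda>b Hb. Hb \<in> span (Tan A x) \<and> norm (h b - Hb) \<le> C"] by blast
  have Hb: "norm (H b - b) \<le> 1 / (4 * M)" if bB: "b \<in> B" for b
  proof -
    have "norm (H b - b) \<le> norm (H b - h b) + norm (h b - b)" using norm_triangle_ineq[of "H b - h b" "h b - b"] by simp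
    also have "norm (H b - h b) \<le> C" using H bB by (simp add: norm_minus_commute)
    also have "norm (h b - b) \<le> 1 / (8 * M)" using W bB unfolding h_def by simp
    finally show ?thesis using Cle Mpos by (simp add: field_simps)
  qed
  have K: "(\<Sum>b\<in>B. \<bar>c b\<bar>) \<le> 2 * M * norm (\<Sum>b\<in>B. c b *\<^sub>R H b)" for c
    using perturb_bound[OF finB Mc Hb _ Mpos] Mpos by simp
  obtain c where uc: "u = (\<Sum>b\<in>B. c b *\<^sub>R H b)"
    using perturb_span[OF finB K _ xk u(1)] H by blast
  have csum: "(\<Sum>b\<in>B. \<bar>c b\<bar>) \<le> 2 * M" using K[of c] uc u(2) by simp
  obtain u1 z1 where u1: "u1 \<in> span (Tan A y)" and z1: "\<And>w. w \<in> span (Tan A y) \<Longrightarrow> orthogonal z1 w"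
    and uz: "u = u1 + z1"
    using orthogonal_subspace_decomp_exists[of "Tan A y" u] by metis
  have "infdist u (span (Tan A y)) \<le> dist u u1" using infdist_le[OF u1] .
  also have "dist u u1 = norm z1" unfolding uz by (simp add: dist_norm)
  also have "norm z1 \<le> 4 * M * C"
  proof (cases "z1 = 0")
    case True
    then show ?thesis using Mpos C_def rpos Bmpos R_pos by simp
  next
    case False
    define v where "v = (1 / norm z1) *\<^sub>R z1"
    have v1: "norm v = 1" unfolding v_def using False by simp
    have vo: "v \<bullet> t = 0" if "t \<in> span (Tan A y)" for t
      using z1[OF that] unfolding v_def orthogonal_def by simp
    have vu: "v \<bullet> u = norm z1"
    proof -
      have "v \<bullet> u = v \<bullet> u1 + v \<bullet> z1" unfolding uz by (simp add: inner_add_right)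
      also have "v \<bullet> u1 = 0" using vo[OF u1] .
      also have "v \<bullet> z1 = norm z1" unfolding v_def using False by (simp add: power2_norm_eq_inner[symmetric] power2_eq_square)
      finally show ?thesis by simp
    qed
    have vH: "\<bar>v \<bullet> H b\<bar> \<le> 2 * C" if bB: "b \<in> B" for b
    proof -
      have "\<bar>v \<bullet> h b\<bar> \<le> C" using nbnd[OF yA _ v1 vo bB] rpos unfolding \<rho>_def by simp
      moreover have "\<bar>v \<bullet> (h b - H b)\<bar> \<le> C"
      proof -
        have "norm (h b - H b) \<le> C" using H bB by blast
        then show ?thesis using Cauchy_Schwarz_ineq2[of v "h b - H b"] v1 by simp
      qed
      moreover have "v \<bullet> H b = v \<bullet> h b - v \<bullet> (h b - H b)" by (simp add: inner_diff_right)
      ultimately show ?thesis by linarith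
    qed
    have "v \<bullet> u = (\<Sum>b\<in>B. c b * (v \<bullet> H b))" unfolding uc by (simp add: inner_sum_right)
    also have "\<dots> \<le> (\<Sum>b\<in>B. \<bar>c b\<bar> * (2 * C))"
    proof (rule sum_mono)
      fix b assume "b \<in> B"
      then have "\<bar>c b * (v \<bullet> H b)\<bar> \<le> \<bar>c b\<bar> * (2 * C)" using vH by (simp add: abs_mult mult_left_mono)
      then show "c b * (v \<bullet> H b) \<le> \<bar>c b\<bar> * (2 * C)" by linarith
    qed
    also have "\<dots> = (\<Sum>b\<in>B. \<bar>c b\<bar>) * (2 * C)" by (simp add: sum_distrib_right)
    also have "\<dots> \<le> (2 * M) * (2 * C)" using csum C_def rpos Bmpos R_pos by (intro mult_right_mono) auto
    finally show ?thesis using vu by simp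
  qed
  also have "4 * M * C = (20 * M * Bm / R) * dist x y" unfolding C_def \<rho>_def by (simp add: field_simps)
  finally show ?thesis .
qed

end
end


lemma unit_in_span:
  fixes S :: "'a::euclidean_space set"
  assumes "dim S \<ge> 1"
  shows "\<exists>u. u \<in> span S \<and> norm u = 1"
proof -
  have "\<not> S \<subseteq> {0}"
  proof
    assume "S \<subseteq> {0}"
    then have "dim S = 0" using dim_eq_0[of S] by blast
    then show False using assms by linarith
  qed
  then obtain t where t: "t \<in> S" "t \<noteq> 0" by blast
  then have "(1 / norm t) *\<^sub>R t \<in> span S" by (simp add: span_base span_mul)
  moreover have "norm ((1 / norm t) *\<^sub>R t) = 1" using t by simp
  ultimately show ?thesis by blast
qed

theorem theorem3p11:
  fixes A :: "'a::euclidean_space set" and k :: nat and a :: 'a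
  assumes "DIM('a) \<ge> 2"
    and "1 \<le> k" and "k \<le> DIM('a) - 1"
    and "positive_reach A"
    and "a \<in> T_k A k"
  shows "\<exists>\<delta>>0. \<exists>L. \<forall>x\<in>T_k A k \<inter> ball a \<delta>. \<forall>y\<in>T_k A k \<inter> ball a \<delta>.
           grass_dist (psi A x) (psi A y) \<le> L * dist x y"
proof -
  obtain \<epsilon> where eps: "\<epsilon> > 0" "\<forall>x. infdist x A < \<epsilon> \<longrightarrow> (\<exists>!p. p \<in> A \<and> dist x p = infdist x A)"
    using assms(4) unfolding positive_reach_def by blast
  interpret pr A \<epsilon> using eps by unfold_locales auto
  have aA: "a \<in> A" and ak: "dim (Tan A a) = k"
    using assms(5) unfolding T_k_def Tan_span_def by auto
  obtain B where BT: "B \<subseteq> Tan A a" and indB: "independent B" and TB: "Tan A a \<subseteq> span B"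
    and cardB: "card B = dim (Tan A a)"
    using basis_exists[of "Tan A a"] by blast
  have finB: "finite B" using indB by (rule finiteI_independent)
  have cB: "card B = k" using cardB ak by simp
  have Bne: "B \<noteq> {}" using cB assms(2) by auto
  have bnz: "b \<noteq> 0" if "b \<in> B" for b using indB that dependent_zero by blast
  obtain M where Mpos: "M > 0" and Mc: "\<And>c. (\<Sum>b\<in>B. \<bar>c b\<bar>) \<le> M * norm (\<Sum>b\<in>B. c b *\<^sub>R b)"
    using coeff_bound[OF finB indB] by blast
  define Bm where "Bm = 1 + (\<Sum>b\<in>B. norm b)"
  have Bm: "norm b \<le> Bm" if "b \<in> B" for b
  proof -
    have "norm b \<le> (\<Sum>b\<in>B. norm b)" using finB that by (intro member_le_sum) auto
    then show ?thesis unfolding Bm_def by simp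
  qed
  have Bmpos: "Bm > 0"
  proof -
    have "(\<Sum>b\<in>B. norm b) \<ge> 0" by (rule sum_nonneg) simp
    then show ?thesis unfolding Bm_def by linarith
  qed
  define \<eta> where "\<eta> = 1 / (48 * M * Bm)"
  have etapos: "\<eta> > 0" unfolding \<eta>_def using Mpos Bmpos by simp
  define lmax where "lmax = min (R / 2) (R / (32 * M * Bm))"
  have lmaxpos: "lmax > 0" unfolding lmax_def using R_pos Mpos Bmpos by simp
  have lmaxR: "lmax \<le> R / 2" and lmaxM: "lmax \<le> R / (32 * M * Bm)" unfolding lmax_def by auto
  have "\<forall>b\<in>B. \<exists>z. z \<in> A \<and> 0 < dist z a \<and> dist z a \<le> lmax \<and>
           norm ((1 / dist z a) *\<^sub>R (z - a) - (1 / norm b) *\<^sub>R b) \<le> \<eta>"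
  proof
    fix b assume "b \<in> B"
    then show "\<exists>z. z \<in> A \<and> 0 < dist z a \<and> dist z a \<le> lmax \<and>
           norm ((1 / dist z a) *\<^sub>R (z - a) - (1 / norm b) *\<^sub>R b) \<le> \<eta>"
      using tangent_direction[of b A a \<eta> lmax] BT bnz etapos lmaxpos by blast
  qed
  then obtain Z where Z: "\<forall>b\<in>B. Z b \<in> A \<and> 0 < dist (Z b) a \<and> dist (Z b) a \<le> lmax \<and>
           norm ((1 / dist (Z b) a) *\<^sub>R (Z b - a) - (1 / norm b) *\<^sub>R b) \<le> \<eta>"
    using bchoice[of B "\<lambda>b z. z \<in> A \<and> 0 < dist z a \<and> dist z a \<le> lmax \<and>
           norm ((1 / dist z a) *\<^sub>R (z - a) - (1 / norm b) *\<^sub>R b) \<le> \<eta>"] by blast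
  define lmin where "lmin = Min ((\<lambda>b. dist (Z b) a) ` B)"
  have lminpos: "lmin > 0" unfolding lmin_def using finB Bne Z by (subst Min_gr_iff) auto
  have Zl: "lmin \<le> dist (Z b) a \<and> dist (Z b) a \<le> lmax" if "b \<in> B" for b
    unfolding lmin_def using finB that Z by auto
  define \<delta> where "\<delta> = min (\<eta> * lmin) (min (lmin / 4) (R / (80 * M * Bm)))"
  have dpos: "\<delta> > 0" unfolding \<delta>_def using etapos lminpos R_pos Mpos Bmpos by simp
  have d1: "\<delta> \<le> \<eta> * lmin" and d2: "\<delta> \<le> lmin / 4" and d3: "\<delta> \<le> R / (80 * M * Bm)"
    unfolding \<delta>_def by auto
  define L where "L = 20 * M * Bm / R"
  have Lpos: "L \<ge> 0" unfolding L_def using Mpos Bmpos R_pos by simp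
  note core' = core[where a = a and B = B and M = M and Bm = Bm and \<eta> = \<eta> and lmax = lmax and lmin = lmin and \<delta> = \<delta> and Z = Z, OF aA finB Mpos Bmpos Bm bnz _ Zl _ \<eta>_def lmaxR lmaxM
      lminpos d1 d2 d3 Mc]
  have oneway: "infdist u (psi A y) \<le> L * dist x y"
    if x: "x \<in> T_k A k \<inter> ball a \<delta>" and y: "y \<in> T_k A k \<inter> ball a \<delta>"
      and u: "u \<in> psi A x" "norm u = 1" for x y u
  proof (cases "x = y")
    case True
    then have "infdist u (psi A y) = 0" using u by simp
    then show ?thesis using Lpos by simp
  next
    case False
    have xA: "x \<in> A" and xk: "dim (Tan A x) = card B" and xa: "dist a x < \<delta>"
      using x cB unfolding T_k_def Tan_span_def by auto
    have yA: "y \<in> A" and ya: "dist a y < \<delta>" using y unfolding T_k_def by auto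
    have "infdist u (span (Tan A y)) \<le> (20 * M * Bm / R) * dist x y"
      by (rule core') (use Z in auto, use xA xk xa yA ya False u in \<open>auto simp: psi_def Tan_span_def\<close>)
    then show ?thesis unfolding L_def psi_def Tan_span_def .
  qed
  have ne: "{u \<in> psi A x. norm u = 1} \<noteq> {}" if "x \<in> T_k A k" for x
  proof -
    have "dim (Tan A x) \<ge> 1" using that assms(2) unfolding T_k_def Tan_span_def by auto
    then show ?thesis using unit_in_span[of "Tan A x"] unfolding psi_def Tan_span_def by auto
  qed
  have "grass_dist (psi A x) (psi A y) \<le> L * dist x y"
    if x: "x \<in> T_k A k \<inter> ball a \<delta>" and y: "y \<in> T_k A k \<inter> ball a \<delta>" for x y
  proof -
    have s1: "(SUP u\<in>{u \<in> psi A x. norm u = 1}. infdist u (psi A y)) \<le> L * dist x y"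
      using ne[of x] x oneway[OF x y] by (intro cSUP_least) auto
    have s2: "(SUP u\<in>{u \<in> psi A y. norm u = 1}. infdist u (psi A x)) \<le> L * dist x y"
      using ne[of y] y oneway[OF y x] by (intro cSUP_least) (auto simp: dist_commute)
    show ?thesis unfolding grass_dist_def using s1 s2 by simp
  qed
  then show ?thesis using dpos by blast
qed


end
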